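(* There exist universal constants $c,c_4>0$ such that the following holds. Let $\bar Q\in\mathbb{R}^{\mathcal{X}\times\mathcal{U}}$ be fixed, let $M\ge1$ be an integer and $\delta\in(0,1)$, and let $\widetilde{\mathcal{T}}_N(\bar Q):=\frac1N\sum_{i=1}^N\widehat{\mathcal{T}}_i(\bar Q)$ be computed from $N$ i.i.d. generative samples with $N\ge\frac{c\log(8DM/\delta)}{(1-\gamma)^2}$. Let $\widehat Q$ be the unique fixed point of the shifted operator $\mathcal{T}_{\mathrm{sh}}(Q):=\mathcal{T}(Q)-\mathcal{T}(\bar Q)+\widetilde{\mathcal{T}}_N(\bar Q)$. Then with probability at least $1-\frac{\delta}{2M}$, $$\|\widehat Q-Q^*\|_\infty\le\frac{\|\bar Q-Q^*\|_\infty}{33}+c_4\Big\{\frac{\|\Sigma_Q^*(Q^* )\|_{\mathrm{diag}}^{1/2}}{1-\gamma}\sqrt{\frac{\log(8DM/\delta)}{N}}+\frac{b(Q^* )}{1-\gamma}\cdot\frac{\log(8DM/\delta)}{N}\Big\}.$$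
   Context: MDP with finite state space $\mathcal{X}$, finite action space $\mathcal{U}$, $D:=|\mathcal{X}||\mathcal{U}|$, transition kernels $P_u(\cdot\mid x)$, reward $r(x,u)$, discount $\gamma\in(0,1)$; $\mathcal{T}(Q)(x,u)=r(x,u)+\gamma\sum_{x'}P_u(x'\mid x)\max_{u'}Q(x',u')$ is the Bellman optimality operator with unique fixed point $Q^*$. Generative samples: i.i.d.; in sample $i$, for each $(x,u)$ independently a next state $x'\sim P_u(\cdot\mid x)$ is drawn and encoded by $Z_i^u(y\mid x)=\mathbf 1\{y=x'\}$, and $R_i(x,u)$ is independent with mean $r(x,u)$ and $|R_i(x,u)-r(x,u)|\le\bar r$ a.s. $\widehat{\mathcal{T}}_i(Q)(x,u)=R_i(x,u)+\gamma\sum_{x'}Z_i^u(x'\mid x)\max_{u'}Q(x',u')$. $\Sigma_Q^*(Q^* ):=\mathrm{Cov}(\widehat{\mathcal{T}}_1(Q^* ))$; $\|A\|_{\mathrm{diag}}:=\max_i|A_{ii}|$; $b(Q):=\bar r+\gamma\|Q\|_\infty$. The shifted operator $\mathcal{T}_{\mathrm{sh}}$ is a $\gamma$-contraction in $\|\cdot\|_\infty$, so its fixed point is unique. *)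

theory Defs
  imports "HOL-Probability.Probability"
begin

text \<open>States and actions are natural numbers drawn from finite nonempty sets
  Xs (states) and Us (actions). Q-functions are maps nat => nat => real;
  only their values on Xs x Us matter. P x u is the law P_u(. | x).\<close>

definition supnorm :: "nat set \<Rightarrow> nat set \<Rightarrow> (nat \<Rightarrow> nat \<Rightarrow> real) \<Rightarrow> real" where
  "supnorm Xs Us Q = Max ((\<lambda>(x,u). \<bar>Q x u\<bar>) ` (Xs \<times> Us))"

definition maxQ :: "nat set \<Rightarrow> (nat \<Rightarrow> nat \<Rightarrow> real) \<Rightarrow> nat \<Rightarrow> real" where
  "maxQ Us Q y = Max ((\<lambda>u'. Q y u') ` Us)"

definition bellman :: "nat set \<Rightarrow> nat set \<Rightarrow> (nat \<Rightarrow> nat \<Rightarrow> nat pmf) \<Rightarrow> (nat \<Rightarrow> nat \<Rightarrow> real)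
    \<Rightarrow> real \<Rightarrow> (nat \<Rightarrow> nat \<Rightarrow> real) \<Rightarrow> nat \<Rightarrow> nat \<Rightarrow> real" where
  "bellman Xs Us P r \<gamma> Q x u = r x u + \<gamma> * (\<Sum>y\<in>Xs. pmf (P x u) y * maxQ Us Q y)"

text \<open>One generative sample: s (x,u) = (x', R(x,u)) with x' the sampled next state.
  The empirical operator: R(x,u) + gamma * sum_{x'} Z(x'|x,u) max_u' Q(x',u')
  with Z the indicator of the sampled next state, i.e. the value below.\<close>
definition emp_bellman :: "nat set \<Rightarrow> real \<Rightarrow> (nat \<times> nat \<Rightarrow> nat \<times> real)
    \<Rightarrow> (nat \<Rightarrow> nat \<Rightarrow> real) \<Rightarrow> nat \<Rightarrow> nat \<Rightarrow> real" where
  "emp_bellman Us \<gamma> s Q x u = snd (s (x,u)) + \<gamma> * maxQ Us Q (fst (s (x,u)))"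

definition sample_law :: "nat set \<Rightarrow> nat set \<Rightarrow> (nat \<Rightarrow> nat \<Rightarrow> nat pmf)
    \<Rightarrow> (nat \<Rightarrow> nat \<Rightarrow> real measure) \<Rightarrow> (nat \<times> nat \<Rightarrow> nat \<times> real) measure" where
  "sample_law Xs Us P \<rho> = (\<Pi>\<^sub>M (x,u)\<in>Xs \<times> Us. (measure_pmf (P x u) \<Otimes>\<^sub>M \<rho> x u))"

definition samples_law :: "nat \<Rightarrow> nat set \<Rightarrow> nat set \<Rightarrow> (nat \<Rightarrow> nat \<Rightarrow> nat pmf)
    \<Rightarrow> (nat \<Rightarrow> nat \<Rightarrow> real measure) \<Rightarrow> (nat \<Rightarrow> nat \<times> nat \<Rightarrow> nat \<times> real) measure" where
  "samples_law N Xs Us P \<rho> = (\<Pi>\<^sub>M i\<in>{..<N}. sample_law Xs Us P \<rho>)"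

definition avg_emp_bellman :: "nat \<Rightarrow> nat set \<Rightarrow> real \<Rightarrow> (nat \<Rightarrow> nat \<times> nat \<Rightarrow> nat \<times> real)
    \<Rightarrow> (nat \<Rightarrow> nat \<Rightarrow> real) \<Rightarrow> nat \<Rightarrow> nat \<Rightarrow> real" where
  "avg_emp_bellman N Us \<gamma> \<omega> Q x u = (1 / real N) * (\<Sum>i<N. emp_bellman Us \<gamma> (\<omega> i) Q x u)"

definition shifted_bellman where
  "shifted_bellman N Xs Us P r \<gamma> \<omega> Qbar Q x u =
     bellman Xs Us P r \<gamma> Q x u - bellman Xs Us P r \<gamma> Qbar x u
     + avg_emp_bellman N Us \<gamma> \<omega> Qbar x u"

definition var_of :: "'a measure \<Rightarrow> ('a \<Rightarrow> real) \<Rightarrow> real" where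
  "var_of S f = (\<integral>s. (f s - (\<integral>t. f t \<partial>S))\<^sup>2 \<partial>S)"

text \<open>diag-norm of the covariance matrix Sigma_Q*(Q) = Cov(That_1(Q)):
  the largest diagonal entry, i.e. the largest coordinate variance.\<close>
definition sigma_diag where
  "sigma_diag Xs Us P \<rho> \<gamma> Q =
     Max ((\<lambda>(x,u). \<bar>var_of (sample_law Xs Us P \<rho>) (\<lambda>s. emp_bellman Us \<gamma> s Q x u)\<bar>) ` (Xs \<times> Us))"

end

theory Submission
  imports Defs
begin


lemma exp_le_quad:
  fixes y :: real assumes "\<bar>y\<bar> \<le> 1" shows "exp y \<le> 1 + y + y\<^sup>2"
proof (cases "y \<ge> 0")
  case True thus ?thesis using exp_bound assms by auto
next
  case False
  define z where "z = - y"
  have z: "0 \<le> z" "z \<le> 1" using False assms by (auto simp: z_def)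
  have e: "1 + z + z\<^sup>2 / 2 \<le> exp z" using exp_lower_Taylor_quadratic z by auto
  have "0 \<le> z\<^sup>2" by simp
  hence pos: "0 < 1 + z + z\<^sup>2 / 2" using z by linarith
  have "(1 - z + z\<^sup>2) * (1 + z + z\<^sup>2 / 2) \<ge> 1"
  proof -
    have "(1 - z + z\<^sup>2) * (1 + z + z\<^sup>2 / 2) = 1 + z\<^sup>2/2 + z^3/2 + z^4/2"
      unfolding power2_eq_square power3_eq_cube power4_eq_xxxx by (simp add: field_simps)
    moreover have "0 \<le> z^3" "0 \<le> z^4" using z by auto
    moreover have "0 \<le> z\<^sup>2" by simp
    ultimately show ?thesis by linarith
  qed
  hence "1 / (1 + z + z\<^sup>2 / 2) \<le> 1 - z + z\<^sup>2"
    using pos by (simp add: divide_le_eq mult.commute)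
  moreover have "exp y = 1 / exp z" by (simp add: z_def exp_minus field_simps)
  moreover have "1 / exp z \<le> 1 / (1 + z + z\<^sup>2 / 2)"
    using e pos by (intro divide_left_mono) auto
  ultimately show ?thesis by (simp add: z_def)
qed


lemma mgf_bound:
  fixes S :: "'a measure" and g :: "'a \<Rightarrow> real"
  assumes ps: "prob_space S" and gm: "g \<in> borel_measurable S"
    and AEb: "AE s in S. \<bar>g s\<bar> \<le> B" and g0: "integral\<^sup>L S g = 0"
    and var: "(\<integral>s. (g s)\<^sup>2 \<partial>S) \<le> V" and l: "0 \<le> l" "l * B \<le> 1"
  shows "(\<integral>\<^sup>+s. ennreal (exp (l * g s)) \<partial>S) \<le> ennreal (exp (l\<^sup>2 * V))"
proof -
  interpret prob_space S by (rule ps)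
  have ig: "integrable S g" using AEb gm by (intro integrable_const_bound[where B=B]) auto
  have sq: "AE s in S. norm ((g s)\<^sup>2) \<le> B\<^sup>2"
    using AEb
  proof (rule eventually_mono)
    fix s assume "\<bar>g s\<bar> \<le> B"
    hence "\<bar>g s\<bar> \<le> \<bar>B\<bar>" by simp
    thus "norm ((g s)\<^sup>2) \<le> B\<^sup>2" using abs_le_square_iff by auto
  qed
  have ig2: "integrable S (\<lambda>s. (g s)\<^sup>2)" using sq gm by (intro integrable_const_bound[where B="B\<^sup>2"]) auto
  have pw: "AE s in S. exp (l * g s) \<le> 1 + l * g s + l\<^sup>2 * (g s)\<^sup>2"
    using AEb
  proof (rule eventually_mono)
    fix s assume b: "\<bar>g s\<bar> \<le> B"
    have "\<bar>l * g s\<bar> = l * \<bar>g s\<bar>" using l by (simp add: abs_mult)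
    also have "\<dots> \<le> l * B" using b l by (intro mult_left_mono) auto
    finally have "\<bar>l * g s\<bar> \<le> 1" using l by linarith
    from exp_le_quad[OF this] show "exp (l * g s) \<le> 1 + l * g s + l\<^sup>2 * (g s)\<^sup>2"
      by (simp add: power_mult_distrib)
  qed
  have nn: "AE s in S. 0 \<le> 1 + l * g s + l\<^sup>2 * (g s)\<^sup>2"
    using pw by (rule eventually_mono) (smt (verit) exp_gt_zero)
  have int3: "integrable S (\<lambda>s. 1 + l * g s + l\<^sup>2 * (g s)\<^sup>2)"
    using ig ig2 by auto
  have "(\<integral>\<^sup>+s. ennreal (exp (l * g s)) \<partial>S) \<le> (\<integral>\<^sup>+s. ennreal (1 + l * g s + l\<^sup>2 * (g s)\<^sup>2) \<partial>S)"
    using pw by (intro nn_integral_mono_AE) (auto elim!: eventually_mono intro: ennreal_leI)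
  also have "\<dots> = ennreal (\<integral>s. 1 + l * g s + l\<^sup>2 * (g s)\<^sup>2 \<partial>S)"
    by (rule nn_integral_eq_integral[OF int3 nn])
  also have "(\<integral>s. 1 + l * g s + l\<^sup>2 * (g s)\<^sup>2 \<partial>S) \<le> exp (l\<^sup>2 * V)"
  proof -
    have "(\<integral>s. 1 + l * g s + l\<^sup>2 * (g s)\<^sup>2 \<partial>S) = 1 + l * integral\<^sup>L S g + l\<^sup>2 * (\<integral>s. (g s)\<^sup>2 \<partial>S)"
      using ig ig2 by (simp add: prob_space)
    also have "\<dots> \<le> 1 + l\<^sup>2 * V" using g0 var by (simp add: mult_left_mono)
    also have "1 + l\<^sup>2 * V \<le> exp (l\<^sup>2 * V)" using exp_ge_add_one_self by simp
    finally show ?thesis .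
  qed
  hence "ennreal (\<integral>s. 1 + l * g s + l\<^sup>2 * (g s)\<^sup>2 \<partial>S) \<le> ennreal (exp (l\<^sup>2 * V))"
    by (rule ennreal_leI)
  finally show ?thesis .
qed

lemma bern_exponent:
  fixes B V a t :: real
  assumes B: "0 < B" and a: "0 < a" and V0: "0 \<le> V"
    and t: "2 * sqrt (V * a) + 2 * B * a \<le> t"
  defines "l \<equiv> (if 2 * V \<le> t * B then 1 / B else t / (2 * V))"
  shows "0 < l" "l * B \<le> 1" "- l * t + l\<^sup>2 * V \<le> - a"
proof -
  have sq0: "0 \<le> sqrt (V * a)" using V0 a by simp
  have tpos: "0 < t" using B a sq0 t by (smt (verit) mult_pos_pos)
  show "0 < l"
  proof (cases "2 * V \<le> t * B")
    case True thus ?thesis using B by (simp add: l_def)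
  next
    case False
    hence "0 < V" using tpos B by (smt (verit) mult_pos_pos)
    thus ?thesis using False tpos by (simp add: l_def)
  qed
  show "l * B \<le> 1"
  proof (cases "2 * V \<le> t * B")
    case True thus ?thesis using B by (simp add: l_def)
  next
    case False
    hence V: "0 < V" using tpos B by (smt (verit) mult_pos_pos)
    have "t / (2 * V) * B = (t * B) / (2 * V)" by simp
    also have "\<dots> \<le> 1" using False V by (simp add: divide_le_eq)
    finally show ?thesis using False by (simp add: l_def)
  qed
  show "- l * t + l\<^sup>2 * V \<le> - a"
  proof (cases "2 * V \<le> t * B")
    case True
    have "- l * t + l\<^sup>2 * V = (- t * B + V) / B\<^sup>2"
      using True B by (simp add: l_def field_simps power2_eq_square)
    also have "\<dots> \<le> (- (B * a) * B) / B\<^sup>2"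
    proof (rule divide_right_mono)
      have "- t * B + V \<le> - t * B / 2" using True by simp
      also have "\<dots> \<le> - (B * a) * B"
      proof -
        have "2 * B * a \<le> t" using t sq0 by linarith
        hence "2 * B * a * B \<le> t * B" using B by (intro mult_right_mono) auto
        thus ?thesis by simp
      qed
      finally show "- t * B + V \<le> - (B * a) * B" .
    qed simp
    also have "\<dots> = - a" using B by (simp add: power2_eq_square)
    finally show ?thesis .
  next
    case False
    hence V: "0 < V" using tpos B by (smt (verit) mult_pos_pos)
    have "- l * t + l\<^sup>2 * V = - t\<^sup>2 / (4 * V)"
      using False V by (simp add: l_def field_simps power2_eq_square)
    also have "\<dots> \<le> - (4 * V * a) / (4 * V)"
    proof -
      have "2 * sqrt (V * a) \<le> t" using t B a by (smt (verit) mult_pos_pos)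
      hence "(2 * sqrt (V * a))\<^sup>2 \<le> t\<^sup>2" using sq0 by (intro power_mono) auto
      hence "4 * V * a \<le> t\<^sup>2" using V0 a by (simp add: power_mult_distrib)
      thus ?thesis using V by (intro divide_right_mono) auto
    qed
    also have "\<dots> = - a" using V by simp
    finally show ?thesis .
  qed
qed

lemma bern_pos:
  fixes S :: "'a measure" and g :: "'a \<Rightarrow> real"
  assumes ps: "prob_space S" and gm[measurable]: "g \<in> borel_measurable S"
    and AEb: "AE s in S. \<bar>g s\<bar> \<le> B" and g0: "integral\<^sup>L S g = 0"
    and var: "(\<integral>s. (g s)\<^sup>2 \<partial>S) \<le> V" and B: "0 < B" and a: "0 < a" and N: "0 < N"
    and t: "2 * sqrt (V * a) + 2 * B * a \<le> t"
  shows "measure (PiM {..<N} (\<lambda>_. S)) {\<omega> \<in> space (PiM {..<N} (\<lambda>_. S)). real N * t \<le> (\<Sum>i<N. g (\<omega> i))}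
           \<le> exp (- (real N * a))"
proof -
  interpret S: prob_space S by (rule ps)
  interpret PS: product_prob_space "\<lambda>_::nat. S" "{..<N}" by unfold_locales
  interpret PM: prob_space "PiM {..<N} (\<lambda>_::nat. S)" by (rule prob_space_PiM) (rule ps)
  let ?M = "PiM {..<N} (\<lambda>_::nat. S)"
  have V0: "0 \<le> V"
  proof -
    have "0 \<le> (\<integral>s. (g s)\<^sup>2 \<partial>S)" by (rule integral_nonneg_AE) auto
    thus ?thesis using var by linarith
  qed
  define l where "l = (if 2 * V \<le> t * B then 1 / B else t / (2 * V))"
  have lpos: "0 < l" and lB: "l * B \<le> 1" and ex: "- l * t + l\<^sup>2 * V \<le> - a" using bern_exponent[OF B a V0 t] unfolding l_def by auto
  have mgf: "(\<integral>\<^sup>+s. ennreal (exp (l * g s)) \<partial>S) \<le> ennreal (exp (l\<^sup>2 * V))" using mgf_bound[OF ps gm AEb g0 var] lpos lB by auto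
  have meas: "(\<lambda>\<omega>. (\<Sum>i<N. g (\<omega> i)) * indicator (space ?M) \<omega>) \<in> borel_measurable ?M" by measurable
  have "emeasure ?M {\<omega> \<in> space ?M. real N * t \<le> (\<Sum>i<N. g (\<omega> i))}
      \<le> ennreal (exp (- l * (real N * t))) *
        (\<integral>\<^sup>+\<omega>. ennreal (exp (l * (\<Sum>i<N. g (\<omega> i)))) * indicator (space ?M) \<omega> \<partial>?M)" by (rule Chernoff_ineq_nn_integral_ge[OF lpos sets.top meas])
  also have "(\<integral>\<^sup>+\<omega>. ennreal (exp (l * (\<Sum>i<N. g (\<omega> i)))) * indicator (space ?M) \<omega> \<partial>?M)
      = (\<integral>\<^sup>+\<omega>. (\<Prod>i\<in>{..<N}. ennreal (exp (l * g (\<omega> i)))) \<partial>?M)" by (intro nn_integral_cong)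
       (simp add: sum_distrib_left exp_sum prod_ennreal)
  also have "\<dots> = (\<Prod>i\<in>{..<N}. (\<integral>\<^sup>+s. ennreal (exp (l * g s)) \<partial>S))" by (rule PS.product_nn_integral_prod) auto
  also have "ennreal (exp (- l * (real N * t))) * (\<Prod>i\<in>{..<N}. (\<integral>\<^sup>+s. ennreal (exp (l * g s)) \<partial>S))
     \<le> ennreal (exp (- l * (real N * t))) * (\<Prod>i\<in>{..<N}. ennreal (exp (l\<^sup>2 * V)))" by (intro mult_left_mono prod_mono_ennreal mgf) auto
  also have "ennreal (exp (- l * (real N * t))) * (\<Prod>i\<in>{..<N}. ennreal (exp (l\<^sup>2 * V)))
       = ennreal (exp (real N * (- l * t + l\<^sup>2 * V)))" proof -
    have e1: "exp (- l * (real N * t)) * exp (l\<^sup>2 * V) ^ N = exp (real N * (- l * t + l\<^sup>2 * V))"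
      unfolding exp_of_nat_mult[symmetric] exp_add[symmetric] by (simp add: algebra_simps)
    have e2: "ennreal (exp (- l * (real N * t))) * (\<Prod>i\<in>{..<N}. ennreal (exp (l\<^sup>2 * V)))
        = ennreal (exp (- l * (real N * t)) * exp (l\<^sup>2 * V) ^ N)"
      by (simp add: ennreal_mult ennreal_power)
    show ?thesis using e1 e2 by simp
  qed
  also have "\<dots> \<le> ennreal (exp (- (real N * a)))" proof -
    have "real N * (- l * t + l\<^sup>2 * V) \<le> real N * (- a)" using ex by (intro mult_left_mono) auto
    thus ?thesis by (intro ennreal_leI) simp
  qed
  finally show ?thesis by (simp add: measure_def enn2real_leI)
qed

lemma bern_strict:
  fixes S :: "'a measure" and g :: "'a \<Rightarrow> real"
  assumes ps: "prob_space S" and gm[measurable]: "g \<in> borel_measurable S"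
    and AEb: "AE s in S. \<bar>g s\<bar> \<le> B" and g0: "integral\<^sup>L S g = 0"
    and var: "(\<integral>s. (g s)\<^sup>2 \<partial>S) \<le> V" and B: "0 \<le> B" and a: "0 < a" and N: "0 < N"
    and t: "2 * sqrt (V * a) + 2 * B * a \<le> t"
  shows "measure (PiM {..<N} (\<lambda>_. S)) {\<omega> \<in> space (PiM {..<N} (\<lambda>_. S)). real N * t < (\<Sum>i<N. g (\<omega> i))}
           \<le> exp (- (real N * a))"
proof -
  let ?M = "PiM {..<N} (\<lambda>_::nat. S)"
  interpret PM: prob_space ?M by (rule prob_space_PiM) (rule ps)
  define A where "A n = {\<omega> \<in> space ?M. real N * (t + 1 / real (Suc n)) \<le> (\<Sum>i<N. g (\<omega> i))}" for n
  have bnd: "measure ?M (A n) \<le> exp (- (real N * a))" for n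
  proof -
    define B' where "B' = B + 1 / (2 * a * real (Suc n))"
    have B': "0 < B'" using B a by (simp add: B'_def add_nonneg_pos)
    have AE': "AE s in S. \<bar>g s\<bar> \<le> B'"
    proof -
      have h: "0 \<le> 1 / (2 * a * real (Suc n))" using a by simp
      show ?thesis using AEb by (rule eventually_mono) (insert h, unfold B'_def, linarith)
    qed
    have p: "0 < a * 2 + a * (real n * 2)" using a by (intro add_pos_nonneg) auto
    hence nz: "a * 2 + a * (real n * 2) \<noteq> 0" "2 * a * real (Suc n) \<noteq> 0" using a by auto
    have "2 * B' * a = 2 * B * a + 1 / real (Suc n)"
      using a nz by (simp add: B'_def field_simps)
    hence t': "2 * sqrt (V * a) + 2 * B' * a \<le> t + 1 / real (Suc n)" using t by linarith
    show ?thesis unfolding A_def by (rule bern_pos[OF ps gm AE' g0 var B' a N t'])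
  qed
  have sets: "A n \<in> sets ?M" for n unfolding A_def by measurable
  have inc: "incseq A"
  proof (rule incseq_SucI)
    fix n
    have "1 / real (Suc (Suc n)) \<le> 1 / real (Suc n)" by (intro divide_left_mono) auto
    hence "real N * (t + 1 / real (Suc (Suc n))) \<le> real N * (t + 1 / real (Suc n))"
      by (intro mult_left_mono) auto
    thus "A n \<subseteq> A (Suc n)" unfolding A_def by auto
  qed
  have un: "(\<Union>n. A n) = {\<omega> \<in> space ?M. real N * t < (\<Sum>i<N. g (\<omega> i))}"
  proof safe
    fix \<omega> n assume "\<omega> \<in> A n"
    hence w: "\<omega> \<in> space ?M" "real N * (t + 1 / real (Suc n)) \<le> (\<Sum>i<N. g (\<omega> i))" by (auto simp: A_def)
    have "real N * t < real N * (t + 1 / real (Suc n))" using N by simp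
    thus "\<omega> \<in> space ?M" "real N * t < (\<Sum>i<N. g (\<omega> i))" using w by auto
  next
    fix \<omega> assume w: "\<omega> \<in> space ?M" "real N * t < (\<Sum>i<N. g (\<omega> i))"
    have "0 < (\<Sum>i<N. g (\<omega> i)) / real N - t" using w N by (simp add: field_simps)
    then obtain n where n: "inverse (real (Suc n)) < (\<Sum>i<N. g (\<omega> i)) / real N - t"
      using reals_Archimedean by blast
    hence "real N * (t + 1 / real (Suc n)) \<le> (\<Sum>i<N. g (\<omega> i))"
      using N by (simp add: field_simps inverse_eq_divide)
    thus "\<omega> \<in> (\<Union>n. A n)" using w by (auto simp: A_def)
  qed
  have "(\<lambda>n. measure ?M (A n)) \<longlonglongrightarrow> measure ?M (\<Union>n. A n)"
    using sets inc by (intro PM.finite_Lim_measure_incseq) auto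
  hence "measure ?M (\<Union>n. A n) \<le> exp (- (real N * a))"
    by (rule LIMSEQ_le_const2) (use bnd in auto)
  thus ?thesis using un by simp
qed

lemma bern_two:
  fixes S :: "'a measure" and f :: "'a \<Rightarrow> real"
  assumes ps: "prob_space S" and fm[measurable]: "f \<in> borel_measurable S"
    and AEb: "AE s in S. \<bar>f s - \<mu>\<bar> \<le> B" and mu: "integral\<^sup>L S f = \<mu>"
    and var: "(\<integral>s. (f s - \<mu>)\<^sup>2 \<partial>S) \<le> V" and B: "0 \<le> B" and a: "0 < a" and N: "0 < N"
    and t: "2 * sqrt (V * a) + 2 * B * a \<le> t"
  shows "measure (PiM {..<N} (\<lambda>_. S)) {\<omega> \<in> space (PiM {..<N} (\<lambda>_. S)). t < \<bar>1 / real N * (\<Sum>i<N. f (\<omega> i)) - \<mu>\<bar>}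
           \<le> 2 * exp (- (real N * a))"
proof -
  let ?M = "PiM {..<N} (\<lambda>_::nat. S)"
  interpret S: prob_space S by (rule ps)
  interpret PM: prob_space ?M by (rule prob_space_PiM) (rule ps)
  have AEb': "AE s in S. norm (f s) \<le> B + \<bar>\<mu>\<bar>" using AEb by (rule eventually_mono) auto
  have fi: "integrable S f" using AEb' fm by (intro S.integrable_const_bound) 
  define g where "g s = f s - \<mu>" for s
  have gm[measurable]: "g \<in> borel_measurable S" unfolding g_def by measurable
  have g0: "integral\<^sup>L S g = 0" unfolding g_def using fi mu by (simp add: S.prob_space)
  have g0': "integral\<^sup>L S (\<lambda>s. - g s) = 0" using g0 by simp
  have AEg: "AE s in S. \<bar>g s\<bar> \<le> B" using AEb by (simp add: g_def)
  have AEg': "AE s in S. \<bar>- g s\<bar> \<le> B" using AEb by (simp add: g_def abs_minus_commute)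
  have varg: "(\<integral>s. (g s)\<^sup>2 \<partial>S) \<le> V" using var by (simp add: g_def)
  have varg': "(\<integral>s. (- g s)\<^sup>2 \<partial>S) \<le> V" using var by (simp add: g_def power2_commute)
  have sumg: "(\<Sum>i<N. g (\<omega> i)) = (\<Sum>i<N. f (\<omega> i)) - real N * \<mu>" for \<omega>
    by (simp add: g_def sum_subtractf)
  have set_eq: "{\<omega> \<in> space ?M. t < \<bar>1 / real N * (\<Sum>i<N. f (\<omega> i)) - \<mu>\<bar>}
     = {\<omega> \<in> space ?M. real N * t < (\<Sum>i<N. g (\<omega> i))} \<union> {\<omega> \<in> space ?M. real N * t < (\<Sum>i<N. - g (\<omega> i))}"
  proof -
    have *: "(t < \<bar>x / real N - \<mu>\<bar>) \<longleftrightarrow> (real N * t < x - real N * \<mu> \<or> real N * t < - (x - real N * \<mu>))" for x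
    proof -
      have "x / real N - \<mu> = (x - real N * \<mu>) / real N" using N by (simp add: field_simps)
      hence "(t < \<bar>x / real N - \<mu>\<bar>) \<longleftrightarrow> (t < \<bar>x - real N * \<mu>\<bar> / real N)" by simp
      also have "\<dots> \<longleftrightarrow> real N * t < \<bar>x - real N * \<mu>\<bar>" using N by (simp add: field_simps)
      also have "\<dots> \<longleftrightarrow> (real N * t < x - real N * \<mu> \<or> real N * t < - (x - real N * \<mu>))" by linarith
      finally show ?thesis .
    qed
    show ?thesis by (auto simp: * sumg sum_negf)
  qed
  have m1: "measure ?M {\<omega> \<in> space ?M. real N * t < (\<Sum>i<N. g (\<omega> i))} \<le> exp (- (real N * a))"
    by (rule bern_strict[OF ps gm AEg g0 varg B a N t])
  have m2: "measure ?M {\<omega> \<in> space ?M. real N * t < (\<Sum>i<N. - g (\<omega> i))} \<le> exp (- (real N * a))"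
    by (rule bern_strict[OF ps _ AEg' g0' varg' B a N t]) measurable
  have "measure ?M {\<omega> \<in> space ?M. t < \<bar>1 / real N * (\<Sum>i<N. f (\<omega> i)) - \<mu>\<bar>}
     \<le> measure ?M {\<omega> \<in> space ?M. real N * t < (\<Sum>i<N. g (\<omega> i))} + measure ?M {\<omega> \<in> space ?M. real N * t < (\<Sum>i<N. - g (\<omega> i))}"
    unfolding set_eq by (rule measure_Un_le) measurable
  thus ?thesis using m1 m2 by linarith
qed




lemma Max_diff_le:
  fixes f g :: "nat \<Rightarrow> real"
  assumes U: "finite U" "U \<noteq> {}" and d: "\<And>u. u \<in> U \<Longrightarrow> \<bar>f u - g u\<bar> \<le> d"
  shows "\<bar>Max (f ` U) - Max (g ` U)\<bar> \<le> d"
proof -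
  have A: "Max (f ` U) \<le> Max (g ` U) + d" if d': "\<And>u. u \<in> U \<Longrightarrow> \<bar>f u - g u\<bar> \<le> d" for f g :: "nat \<Rightarrow> real"
  proof -
    obtain u where u: "u \<in> U" "Max (f ` U) = f u"
      using U by (metis (mono_tags, lifting) Max_in finite_imageI image_iff image_is_empty)
    have "f u \<le> g u + d" using d'[OF u(1)] by linarith
    also have "g u \<le> Max (g ` U)" using U u by auto
    finally show ?thesis using u by linarith
  qed
  have "Max (f ` U) \<le> Max (g ` U) + d" by (rule A) (rule d)
  moreover have "Max (g ` U) \<le> Max (f ` U) + d" by (rule A) (use d in \<open>simp add: abs_minus_commute\<close>)
  ultimately show ?thesis by linarith
qed

lemma supnorm_ge:
  assumes "finite Xs" "finite Us" "x \<in> Xs" "u \<in> Us"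
  shows "\<bar>Q x u\<bar> \<le> supnorm Xs Us Q"
  unfolding supnorm_def using assms by (intro Max_ge) force+

lemma supnorm_le:
  assumes "finite Xs" "finite Us" "Xs \<noteq> {}" "Us \<noteq> {}" and b: "\<And>x u. x \<in> Xs \<Longrightarrow> u \<in> Us \<Longrightarrow> \<bar>Q x u\<bar> \<le> c"
  shows "supnorm Xs Us Q \<le> c"
  unfolding supnorm_def using assms by (intro Max.boundedI) auto

lemma supnorm_nonneg:
  assumes "finite Xs" "finite Us" "Xs \<noteq> {}" "Us \<noteq> {}"
  shows "0 \<le> supnorm Xs Us Q"
proof -
  obtain x u where "x \<in> Xs" "u \<in> Us" using assms by blast
  thus ?thesis using supnorm_ge[OF assms(1,2)] by (meson abs_ge_zero order_trans)
qed

lemma supnorm_cong: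
  assumes "\<And>x u. x \<in> Xs \<Longrightarrow> u \<in> Us \<Longrightarrow> Q1 x u = Q2 x u"
  shows "supnorm Xs Us Q1 = supnorm Xs Us Q2"
  unfolding supnorm_def using assms by (intro arg_cong[where f=Max] image_cong) auto

lemma maxQ_diff:
  assumes "finite Xs" "finite Us" "Us \<noteq> {}" "y \<in> Xs"
  shows "\<bar>maxQ Us Q1 y - maxQ Us Q2 y\<bar> \<le> supnorm Xs Us (\<lambda>x u. Q1 x u - Q2 x u)"
  unfolding maxQ_def
  by (rule Max_diff_le) (use assms supnorm_ge[OF assms(1,2), of y _ "\<lambda>x u. Q1 x u - Q2 x u"] in auto)

lemma maxQ_abs:
  assumes "finite Xs" "finite Us" "Us \<noteq> {}" "y \<in> Xs"
  shows "\<bar>maxQ Us Q y\<bar> \<le> supnorm Xs Us Q"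
proof -
  have "maxQ Us (\<lambda>x u. 0) y = 0" using assms by (simp add: maxQ_def)
  thus ?thesis using maxQ_diff[OF assms, of Q "\<lambda>x u. 0"] by simp
qed

lemma maxQ_cong:
  assumes "\<And>u. u \<in> Us \<Longrightarrow> Q1 y u = Q2 y u"
  shows "maxQ Us Q1 y = maxQ Us Q2 y"
  unfolding maxQ_def using assms by (intro arg_cong[where f=Max] image_cong) auto

lemma pmf_avg_bound:
  fixes h :: "nat \<Rightarrow> real"
  assumes "finite Xs" "set_pmf p \<subseteq> Xs" and b: "\<And>y. y \<in> Xs \<Longrightarrow> \<bar>h y\<bar> \<le> c"
  shows "\<bar>\<Sum>y\<in>Xs. pmf p y * h y\<bar> \<le> c"
proof -
  have "\<bar>\<Sum>y\<in>Xs. pmf p y * h y\<bar> \<le> (\<Sum>y\<in>Xs. \<bar>pmf p y * h y\<bar>)" by (rule sum_abs)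
  also have "\<dots> \<le> (\<Sum>y\<in>Xs. pmf p y * c)"
    by (intro sum_mono) (auto simp: abs_mult intro!: mult_left_mono b)
  also have "\<dots> = c" using sum_pmf_eq_1[OF assms(1,2)] by (simp add: sum_distrib_right[symmetric])
  finally show ?thesis .
qed

lemma bellman_diff:
  assumes "finite Xs" "finite Us" "Us \<noteq> {}" "set_pmf (P x u) \<subseteq> Xs" "0 \<le> \<gamma>"
  shows "\<bar>bellman Xs Us P r \<gamma> Q1 x u - bellman Xs Us P r \<gamma> Q2 x u\<bar> \<le> \<gamma> * supnorm Xs Us (\<lambda>x u. Q1 x u - Q2 x u)"
proof -
  have "bellman Xs Us P r \<gamma> Q1 x u - bellman Xs Us P r \<gamma> Q2 x u
      = \<gamma> * (\<Sum>y\<in>Xs. pmf (P x u) y * (maxQ Us Q1 y - maxQ Us Q2 y))"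
    by (simp add: bellman_def algebra_simps sum_subtractf)
  also have "\<bar>\<dots>\<bar> \<le> \<gamma> * supnorm Xs Us (\<lambda>x u. Q1 x u - Q2 x u)"
    using assms by (simp add: abs_mult, intro mult_left_mono pmf_avg_bound maxQ_diff) auto
  finally show ?thesis .
qed

lemma bellman_cong:
  assumes "\<And>x u. x \<in> Xs \<Longrightarrow> u \<in> Us \<Longrightarrow> Q1 x u = Q2 x u"
  shows "bellman Xs Us P r \<gamma> Q1 x u = bellman Xs Us P r \<gamma> Q2 x u"
  unfolding bellman_def using assms by (intro arg_cong2[where f="(+)"] refl arg_cong2[where f="(*)"] sum.cong)
    (auto intro!: maxQ_cong)




lemma distr_pair_snd':
  assumes N: "prob_space N" and M: "sigma_finite_measure M"
  shows "distr (N \<Otimes>\<^sub>M M) M snd = M"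
proof (intro measure_eqI)
  fix A assume A: "A \<in> sets (distr (N \<Otimes>\<^sub>M M) M snd)"
  from A have "emeasure (distr (N \<Otimes>\<^sub>M M) M snd) A = emeasure (N \<Otimes>\<^sub>M M) (space N \<times> A)"
    by (auto simp add: emeasure_distr space_pair_measure dest: sets.sets_into_space intro!: arg_cong2[where f=emeasure])
  with A show "emeasure (distr (N \<Otimes>\<^sub>M M) M snd) A = emeasure M A"
    by (simp add: sigma_finite_measure.emeasure_pair_measure_Times[OF M] prob_space.emeasure_space_1[OF N])
qed simp

locale mdp =
  fixes Xs Us :: "nat set" and P :: "nat \<Rightarrow> nat \<Rightarrow> nat pmf" and r :: "nat \<Rightarrow> nat \<Rightarrow> real"
    and \<rho> :: "nat \<Rightarrow> nat \<Rightarrow> real measure" and rbar \<gamma> :: real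
  assumes fX: "finite Xs" "Xs \<noteq> {}" and fU: "finite Us" "Us \<noteq> {}" and gam: "0 < \<gamma>" "\<gamma> < 1"
    and supp: "\<And>x u. x \<in> Xs \<Longrightarrow> u \<in> Us \<Longrightarrow> set_pmf (P x u) \<subseteq> Xs"
    and rho: "\<And>x u. x \<in> Xs \<Longrightarrow> u \<in> Us \<Longrightarrow> prob_space (\<rho> x u) \<and> sets (\<rho> x u) = sets borel \<and>
          integrable (\<rho> x u) (\<lambda>z. z) \<and> (\<integral>z. z \<partial>(\<rho> x u)) = r x u \<and>
          (AE z in \<rho> x u. \<bar>z - r x u\<bar> \<le> rbar)"
begin

definition K where "K x u = measure_pmf (P x u) \<Otimes>\<^sub>M \<rho> x u"

abbreviation "S \<equiv> sample_law Xs Us P \<rho>"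

lemma S_eq: "S = PiM (Xs \<times> Us) (\<lambda>p. K (fst p) (snd p))"
  unfolding sample_law_def K_def by (intro PiM_cong) auto

lemma K_prob: "x \<in> Xs \<Longrightarrow> u \<in> Us \<Longrightarrow> prob_space (K x u)"
  unfolding K_def using rho by (intro prob_space_pair prob_space_measure_pmf) auto

lemma S_prob: "prob_space S"
  unfolding S_eq by (rule prob_space_PiM) (auto intro: K_prob)

lemma comp_meas: "x \<in> Xs \<Longrightarrow> u \<in> Us \<Longrightarrow> (\<lambda>s. s (x,u)) \<in> measurable S (K x u)"
  unfolding S_eq using measurable_component_singleton[of "(x,u)" "Xs \<times> Us" "\<lambda>p. K (fst p) (snd p)"] by simp

lemma Kp: "\<And>p. p \<in> Xs \<times> Us \<Longrightarrow> prob_space (K (fst p) (snd p))" using K_prob by auto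

lemma comp_distr: "x \<in> Xs \<Longrightarrow> u \<in> Us \<Longrightarrow> distr S (K x u) (\<lambda>s. s (x,u)) = K x u"
  unfolding S_eq using distr_PiM_component[of "Xs \<times> Us" "\<lambda>p. K (fst p) (snd p)" "(x,u)", OF Kp] by simp

lemma AE_comp:
  assumes "x \<in> Xs" "u \<in> Us" "AE z in K x u. Pr z" shows "AE s in S. Pr (s (x,u))"
  unfolding S_eq by (rule AE_PiM_component[of "Xs \<times> Us" "\<lambda>p. K (fst p) (snd p)" "(x,u)" Pr, OF Kp]) (use assms in \<open>simp_all only: fst_conv snd_conv mem_Sigma_iff\<close>)

lemma snd_meas: "x \<in> Xs \<Longrightarrow> u \<in> Us \<Longrightarrow> snd \<in> borel_measurable (K x u)"
proof -
  assume a: "x \<in> Xs" "u \<in> Us"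
  have "snd \<in> measurable (K x u) (\<rho> x u)" unfolding K_def by (rule measurable_snd)
  thus ?thesis using rho[OF a] measurable_cong_sets[of "K x u" "K x u" "\<rho> x u" borel] by auto
qed

lemma fst_meas: "(\<lambda>z. h (fst z) :: real) \<in> borel_measurable (K x u)"
proof -
  have "fst \<in> measurable (K x u) (measure_pmf (P x u))" unfolding K_def by (rule measurable_fst)
  moreover have "h \<in> borel_measurable (measure_pmf (P x u))" by simp
  ultimately show ?thesis by (rule measurable_compose)
qed

lemma phi_meas: "x \<in> Xs \<Longrightarrow> u \<in> Us \<Longrightarrow> (\<lambda>z. snd z + \<gamma> * maxQ Us Q (fst z)) \<in> borel_measurable (K x u)"
  using snd_meas fst_meas[of "\<lambda>y. maxQ Us Q y"] by (intro borel_measurable_add borel_measurable_times borel_measurable_const) auto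

lemma emp_eq: "emp_bellman Us \<gamma> s Q x u = (\<lambda>z. snd z + \<gamma> * maxQ Us Q (fst z)) (s (x,u))"
  by (simp add: emp_bellman_def)

lemma f_meas: "x \<in> Xs \<Longrightarrow> u \<in> Us \<Longrightarrow> (\<lambda>s. emp_bellman Us \<gamma> s Q x u) \<in> borel_measurable S"
  unfolding emp_eq by (rule measurable_compose[OF comp_meas phi_meas])

lemma distr_fstK: "x \<in> Xs \<Longrightarrow> u \<in> Us \<Longrightarrow> distr (K x u) (measure_pmf (P x u)) fst = measure_pmf (P x u)"
  unfolding K_def using rho by (intro prob_space.distr_pair_fst) auto

lemma distr_sndK: "x \<in> Xs \<Longrightarrow> u \<in> Us \<Longrightarrow> distr (K x u) (\<rho> x u) snd = \<rho> x u"
  unfolding K_def using rho by (intro distr_pair_snd' prob_space_measure_pmf prob_space_imp_sigma_finite) auto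

lemma int_K:
  assumes a: "x \<in> Xs" "u \<in> Us"
  shows "integrable (K x u) (\<lambda>z. snd z + \<gamma> * maxQ Us Q (fst z))"
    and "integral\<^sup>L (K x u) (\<lambda>z. snd z + \<gamma> * maxQ Us Q (fst z)) = bellman Xs Us P r \<gamma> Q x u"
proof -
  have fin: "finite (set_pmf (P x u))" using supp[OF a] fX finite_subset by blast
  have i1: "integrable (K x u) snd"
  proof -
    have "integrable (distr (K x u) (\<rho> x u) snd) (\<lambda>z. z)" using distr_sndK[OF a] rho[OF a] by simp
    thus ?thesis using snd_meas[OF a] integrable_distr_eq[of snd "K x u" "\<rho> x u" "\<lambda>z. z"] a
      unfolding K_def by (simp add: measurable_snd)
  qed
  have i2: "integrable (K x u) (\<lambda>z. maxQ Us Q (fst z))"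
  proof -
    have "integrable (distr (K x u) (measure_pmf (P x u)) fst) (\<lambda>y. maxQ Us Q y)"
      using distr_fstK[OF a] integrable_measure_pmf_finite[OF fin] by simp
    thus ?thesis using integrable_distr_eq[of fst "K x u" "measure_pmf (P x u)" "\<lambda>y. maxQ Us Q y"]
      unfolding K_def by (simp add: measurable_fst)
  qed
  show "integrable (K x u) (\<lambda>z. snd z + \<gamma> * maxQ Us Q (fst z))" using i1 i2 by auto
  have e1: "integral\<^sup>L (K x u) snd = r x u"
  proof -
    have "integral\<^sup>L (K x u) snd = integral\<^sup>L (distr (K x u) (\<rho> x u) snd) (\<lambda>z. z)"
      using snd_meas[OF a] rho[OF a] by (subst integral_distr) (auto simp: K_def measurable_snd)
    thus ?thesis using distr_sndK[OF a] rho[OF a] by simp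
  qed
  have e2: "integral\<^sup>L (K x u) (\<lambda>z. maxQ Us Q (fst z)) = (\<Sum>y\<in>Xs. pmf (P x u) y * maxQ Us Q y)"
  proof -
    have "integral\<^sup>L (K x u) (\<lambda>z. maxQ Us Q (fst z)) = integral\<^sup>L (distr (K x u) (measure_pmf (P x u)) fst) (\<lambda>y. maxQ Us Q y)"
      by (subst integral_distr) (auto simp: K_def measurable_fst)
    also have "\<dots> = integral\<^sup>L (measure_pmf (P x u)) (\<lambda>y. maxQ Us Q y)"
      by (subst distr_fstK[OF a]) (rule refl)
    also have "\<dots> = (\<Sum>y\<in>Xs. pmf (P x u) y *\<^sub>R maxQ Us Q y)"
      by (rule integral_measure_pmf) (use supp[OF a] fX in auto)
    finally show ?thesis by simp
  qed
  show "integral\<^sup>L (K x u) (\<lambda>z. snd z + \<gamma> * maxQ Us Q (fst z)) = bellman Xs Us P r \<gamma> Q x u"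
    using i1 i2 e1 e2 by (simp add: bellman_def)
qed

lemma int_S:
  assumes a: "x \<in> Xs" "u \<in> Us"
  shows "integrable S (\<lambda>s. emp_bellman Us \<gamma> s Q x u)"
    and "integral\<^sup>L S (\<lambda>s. emp_bellman Us \<gamma> s Q x u) = bellman Xs Us P r \<gamma> Q x u"
proof -
  have "integrable (distr S (K x u) (\<lambda>s. s (x,u))) (\<lambda>z. snd z + \<gamma> * maxQ Us Q (fst z))"
    using int_K(1)[OF a] comp_distr[OF a] by simp
  thus "integrable S (\<lambda>s. emp_bellman Us \<gamma> s Q x u)"
    unfolding emp_eq using integrable_distr_eq[OF comp_meas[OF a] phi_meas[OF a]] by simp
  have "integral\<^sup>L S (\<lambda>s. emp_bellman Us \<gamma> s Q x u) = integral\<^sup>L (distr S (K x u) (\<lambda>s. s (x,u))) (\<lambda>z. snd z + \<gamma> * maxQ Us Q (fst z))"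
    unfolding emp_eq by (rule integral_distr[symmetric, OF comp_meas[OF a] phi_meas[OF a]])
  thus "integral\<^sup>L S (\<lambda>s. emp_bellman Us \<gamma> s Q x u) = bellman Xs Us P r \<gamma> Q x u"
    using int_K(2)[OF a] comp_distr[OF a] by simp
qed

lemma AE_K: 
  assumes a: "x \<in> Xs" "u \<in> Us"
  shows "AE z in K x u. fst z \<in> Xs \<and> \<bar>snd z - r x u\<bar> \<le> rbar"
proof -
  have 1: "AE z in K x u. fst z \<in> Xs"
  proof -
    have "AE y in distr (K x u) (measure_pmf (P x u)) fst. y \<in> Xs"
      using supp[OF a] by (subst distr_fstK[OF a]) (auto simp: AE_measure_pmf_iff)
    thus ?thesis by (rule AE_distrD[rotated]) (simp add: K_def measurable_fst)
  qed
  have 2: "AE z in K x u. \<bar>snd z - r x u\<bar> \<le> rbar"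
  proof -
    have "AE y in distr (K x u) (\<rho> x u) snd. \<bar>y - r x u\<bar> \<le> rbar"
      using rho[OF a] by (subst distr_sndK[OF a]) auto
    thus ?thesis by (rule AE_distrD[rotated]) (simp add: K_def measurable_snd)
  qed
  show ?thesis using 1 2 by eventually_elim auto
qed

lemma AE_S: 
  assumes a: "x \<in> Xs" "u \<in> Us"
  shows "AE s in S. fst (s (x,u)) \<in> Xs \<and> \<bar>snd (s (x,u)) - r x u\<bar> \<le> rbar"
  by (rule AE_comp[OF a AE_K[OF a]])

lemma rbar_nonneg: "0 \<le> rbar"
proof -
  obtain x u where a: "x \<in> Xs" "u \<in> Us" using fX fU by blast
  interpret R: prob_space "\<rho> x u" using rho[OF a] by auto
  show ?thesis
  proof (rule ccontr)
    assume n: "\<not> 0 \<le> rbar"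
    have A: "AE z in \<rho> x u. \<bar>z - r x u\<bar> \<le> rbar" using rho[OF a] by blast
    have "AE z in \<rho> x u. False" using A by (rule eventually_mono) (use n in \<open>smt (verit) abs_ge_zero\<close>)
    thus False by simp
  qed
qed

end




lemma sq_int_bound:
  fixes g :: "'a \<Rightarrow> real"
  assumes ps: "prob_space S" and gm: "g \<in> borel_measurable S" and b: "AE s in S. \<bar>g s\<bar> \<le> B"
  shows "(\<integral>s. (g s)\<^sup>2 \<partial>S) \<le> B\<^sup>2"
proof -
  interpret prob_space S by (rule ps)
  have sq: "AE s in S. (g s)\<^sup>2 \<le> B\<^sup>2"
    using b
  proof (rule eventually_mono)
    fix s assume "\<bar>g s\<bar> \<le> B"
    hence "\<bar>g s\<bar> \<le> \<bar>B\<bar>" by simp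
    thus "(g s)\<^sup>2 \<le> B\<^sup>2" using abs_le_square_iff by auto
  qed
  have ig2: "integrable S (\<lambda>s. (g s)\<^sup>2)" using sq gm by (intro integrable_const_bound[where B="B\<^sup>2"]) auto
  have "(\<integral>s. (g s)\<^sup>2 \<partial>S) \<le> (\<integral>s. B\<^sup>2 \<partial>S)"
    by (rule integral_mono_AE[OF ig2 _ sq]) simp
  thus ?thesis by (simp add: prob_space)
qed

locale mdp2 = mdp +
  fixes Qstar Qbar :: "nat \<Rightarrow> nat \<Rightarrow> real" and N :: nat
  assumes fixQ: "\<And>x u. x \<in> Xs \<Longrightarrow> u \<in> Us \<Longrightarrow> bellman Xs Us P r \<gamma> Qstar x u = Qstar x u"
    and Npos: "0 < N"
begin

abbreviation "SS \<equiv> samples_law N Xs Us P \<rho>"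

lemma SS_eq: "SS = PiM {..<N} (\<lambda>_. S)" by (simp add: samples_law_def)

definition "W = supnorm Xs Us (\<lambda>x u. Qbar x u - Qstar x u)"
definition "Bf = rbar + 2 * \<gamma> * supnorm Xs Us Qstar"
definition "Bh = 2 * \<gamma> * W"
definition "sig = sigma_diag Xs Us P \<rho> \<gamma> Qstar"

lemma W_nonneg: "0 \<le> W" unfolding W_def using fX fU by (intro supnorm_nonneg) auto
lemma Qs_nonneg: "0 \<le> supnorm Xs Us Qstar" using fX fU by (intro supnorm_nonneg) auto
lemma Bf_nonneg: "0 \<le> Bf" unfolding Bf_def using rbar_nonneg Qs_nonneg gam by simp
lemma Bh_nonneg: "0 \<le> Bh" unfolding Bh_def using W_nonneg gam by simp

lemma avg_eq: "avg_emp_bellman N Us \<gamma> \<omega> Q x u = 1 / real N * (\<Sum>i<N. emp_bellman Us \<gamma> (\<omega> i) Q x u)"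
  by (simp add: avg_emp_bellman_def)

lemma var_le_sig:
  assumes a: "x \<in> Xs" "u \<in> Us"
  shows "(\<integral>s. (emp_bellman Us \<gamma> s Qstar x u - Qstar x u)\<^sup>2 \<partial>S) \<le> sig"
proof -
  have "(\<integral>s. (emp_bellman Us \<gamma> s Qstar x u - Qstar x u)\<^sup>2 \<partial>S) = var_of S (\<lambda>s. emp_bellman Us \<gamma> s Qstar x u)"
    unfolding var_of_def using int_S(2)[OF a, of Qstar] fixQ[OF a] by simp
  also have "\<dots> \<le> \<bar>var_of S (\<lambda>s. emp_bellman Us \<gamma> s Qstar x u)\<bar>" by simp
  also have "\<dots> \<le> sig" unfolding sig_def sigma_diag_def
    using a fX fU by (intro Max_ge) force+
  finally show ?thesis .
qed

lemma probE:
  assumes a: "x \<in> Xs" "u \<in> Us" and ap: "0 < aa" and t: "2 * sqrt (sig * aa) + 2 * Bf * aa \<le> t"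
  shows "measure SS {\<omega> \<in> space SS. t < \<bar>avg_emp_bellman N Us \<gamma> \<omega> Qstar x u - Qstar x u\<bar>} \<le> 2 * exp (- (real N * aa))"
proof -
  have AEb: "AE s in S. \<bar>emp_bellman Us \<gamma> s Qstar x u - Qstar x u\<bar> \<le> Bf"
    using AE_S[OF a]
  proof (rule eventually_mono)
    fix s assume h: "fst (s (x, u)) \<in> Xs \<and> \<bar>snd (s (x, u)) - r x u\<bar> \<le> rbar"
    have q: "Qstar x u = r x u + \<gamma> * (\<Sum>y\<in>Xs. pmf (P x u) y * maxQ Us Qstar y)"
      using fixQ[OF a] by (simp add: bellman_def)
    have m1: "\<bar>maxQ Us Qstar (fst (s (x, u)))\<bar> \<le> supnorm Xs Us Qstar"
      using h fX fU by (intro maxQ_abs) auto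
    have m2: "\<bar>\<Sum>y\<in>Xs. pmf (P x u) y * maxQ Us Qstar y\<bar> \<le> supnorm Xs Us Qstar"
      using fX fU supp[OF a] by (intro pmf_avg_bound maxQ_abs) auto
    have "emp_bellman Us \<gamma> s Qstar x u - Qstar x u
        = (snd (s (x, u)) - r x u) + \<gamma> * maxQ Us Qstar (fst (s (x, u))) - \<gamma> * (\<Sum>y\<in>Xs. pmf (P x u) y * maxQ Us Qstar y)"
      by (simp add: emp_bellman_def q)
    also have "\<bar>\<dots>\<bar> \<le> rbar + \<gamma> * supnorm Xs Us Qstar + \<gamma> * supnorm Xs Us Qstar"
    proof -
      have "\<bar>\<gamma> * maxQ Us Qstar (fst (s (x, u)))\<bar> \<le> \<gamma> * supnorm Xs Us Qstar"
        using m1 gam by (simp add: abs_mult mult_left_mono)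
      moreover have "\<bar>\<gamma> * (\<Sum>y\<in>Xs. pmf (P x u) y * maxQ Us Qstar y)\<bar> \<le> \<gamma> * supnorm Xs Us Qstar"
        using m2 gam by (simp add: abs_mult mult_left_mono)
      ultimately show ?thesis using h by linarith
    qed
    finally show "\<bar>emp_bellman Us \<gamma> s Qstar x u - Qstar x u\<bar> \<le> Bf" by (simp add: Bf_def)
  qed
  have mu: "integral\<^sup>L S (\<lambda>s. emp_bellman Us \<gamma> s Qstar x u) = Qstar x u"
    using int_S(2)[OF a] fixQ[OF a] by simp
  show ?thesis
    unfolding SS_eq avg_eq
    by (rule bern_two[OF S_prob f_meas[OF a] AEb mu var_le_sig[OF a] Bf_nonneg ap Npos t])
qed

lemma probD:
  assumes a: "x \<in> Xs" "u \<in> Us" and ap: "0 < aa" and t: "2 * sqrt (Bh\<^sup>2 * aa) + 2 * Bh * aa \<le> t"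
  shows "measure SS {\<omega> \<in> space SS. t < \<bar>(avg_emp_bellman N Us \<gamma> \<omega> Qbar x u - avg_emp_bellman N Us \<gamma> \<omega> Qstar x u)
             - (bellman Xs Us P r \<gamma> Qbar x u - bellman Xs Us P r \<gamma> Qstar x u)\<bar>} \<le> 2 * exp (- (real N * aa))"
proof -
  define f where "f s = emp_bellman Us \<gamma> s Qbar x u - emp_bellman Us \<gamma> s Qstar x u" for s
  define \<mu> where "\<mu> = bellman Xs Us P r \<gamma> Qbar x u - bellman Xs Us P r \<gamma> Qstar x u"
  have fm: "f \<in> borel_measurable S" unfolding f_def using f_meas[OF a] by (intro borel_measurable_diff) auto
  have AEb: "AE s in S. \<bar>f s - \<mu>\<bar> \<le> Bh"
    using AE_S[OF a]
  proof (rule eventually_mono)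
    fix s assume h: "fst (s (x, u)) \<in> Xs \<and> \<bar>snd (s (x, u)) - r x u\<bar> \<le> rbar"
    have m1: "\<bar>maxQ Us Qbar (fst (s (x, u))) - maxQ Us Qstar (fst (s (x, u)))\<bar> \<le> W"
      unfolding W_def using h fX fU by (intro maxQ_diff) auto
    have m2: "\<bar>\<Sum>y\<in>Xs. pmf (P x u) y * (maxQ Us Qbar y - maxQ Us Qstar y)\<bar> \<le> W"
      unfolding W_def using fX fU supp[OF a] by (intro pmf_avg_bound maxQ_diff) auto
    have "f s - \<mu> = \<gamma> * (maxQ Us Qbar (fst (s (x, u))) - maxQ Us Qstar (fst (s (x, u))))
            - \<gamma> * (\<Sum>y\<in>Xs. pmf (P x u) y * (maxQ Us Qbar y - maxQ Us Qstar y))"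
      by (simp add: f_def \<mu>_def emp_bellman_def bellman_def algebra_simps sum_subtractf)
    also have "\<bar>\<dots>\<bar> \<le> \<gamma> * W + \<gamma> * W"
    proof -
      have "\<bar>\<gamma> * (maxQ Us Qbar (fst (s (x, u))) - maxQ Us Qstar (fst (s (x, u))))\<bar> \<le> \<gamma> * W"
        using m1 gam by (simp add: abs_mult mult_left_mono)
      moreover have "\<bar>\<gamma> * (\<Sum>y\<in>Xs. pmf (P x u) y * (maxQ Us Qbar y - maxQ Us Qstar y))\<bar> \<le> \<gamma> * W"
        using m2 gam by (simp add: abs_mult mult_left_mono)
      ultimately show ?thesis by linarith
    qed
    finally show "\<bar>f s - \<mu>\<bar> \<le> Bh" by (simp add: Bh_def)
  qed
  have mu: "integral\<^sup>L S f = \<mu>"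
    unfolding f_def \<mu>_def using int_S[OF a, of Qbar] int_S[OF a, of Qstar] by simp
  have var: "(\<integral>s. (f s - \<mu>)\<^sup>2 \<partial>S) \<le> Bh\<^sup>2"
    by (rule sq_int_bound[OF S_prob _ AEb]) (use fm in measurable)
  have eq: "avg_emp_bellman N Us \<gamma> \<omega> Qbar x u - avg_emp_bellman N Us \<gamma> \<omega> Qstar x u = 1 / real N * (\<Sum>i<N. f (\<omega> i))" for \<omega>
    by (simp add: avg_eq f_def sum_subtractf right_diff_distrib)
  show ?thesis
    unfolding SS_eq eq \<mu>_def[symmetric]
    by (rule bern_two[OF S_prob fm AEb mu var Bh_nonneg ap Npos t])
qed

end




context mdp2
begin

definition sh where "sh \<omega> Q = (\<lambda>x u. shifted_bellman N Xs Us P r \<gamma> \<omega> Qbar Q x u)"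
definition it where "it \<omega> n = (sh \<omega> ^^ n) Qstar"
definition Ql where "Ql \<omega> x u = lim (\<lambda>n. it \<omega> n x u)"

lemma sh_contr:
  assumes a: "x \<in> Xs" "u \<in> Us"
  shows "\<bar>sh \<omega> Q1 x u - sh \<omega> Q2 x u\<bar> \<le> \<gamma> * supnorm Xs Us (\<lambda>x u. Q1 x u - Q2 x u)"
proof -
  have "sh \<omega> Q1 x u - sh \<omega> Q2 x u = bellman Xs Us P r \<gamma> Q1 x u - bellman Xs Us P r \<gamma> Q2 x u"
    by (simp add: sh_def shifted_bellman_def)
  thus ?thesis using bellman_diff[of Xs Us P x u \<gamma> r Q1 Q2] fX fU supp[OF a] gam by simp
qed

lemma sh_cong:
  assumes "\<And>x u. x \<in> Xs \<Longrightarrow> u \<in> Us \<Longrightarrow> Q1 x u = Q2 x u"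
  shows "sh \<omega> Q1 x u = sh \<omega> Q2 x u"
  unfolding sh_def shifted_bellman_def using bellman_cong[OF assms] by simp

lemma it_Suc: "it \<omega> (Suc n) = sh \<omega> (it \<omega> n)" by (simp add: it_def)

lemma it_conv:
  assumes fixd: "\<And>x u. x \<in> Xs \<Longrightarrow> u \<in> Us \<Longrightarrow> sh \<omega> Qhat x u = Qhat x u"
  shows "supnorm Xs Us (\<lambda>x u. it \<omega> n x u - Qhat x u) \<le> \<gamma> ^ n * supnorm Xs Us (\<lambda>x u. Qstar x u - Qhat x u)"
proof (induction n)
  case 0 thus ?case by (simp add: it_def)
next
  case (Suc n)
  have "supnorm Xs Us (\<lambda>x u. it \<omega> (Suc n) x u - Qhat x u) = supnorm Xs Us (\<lambda>x u. sh \<omega> (it \<omega> n) x u - sh \<omega> Qhat x u)"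
    by (intro supnorm_cong) (simp add: it_Suc fixd)
  also have "\<dots> \<le> \<gamma> * supnorm Xs Us (\<lambda>x u. it \<omega> n x u - Qhat x u)"
    by (rule supnorm_le[OF fX(1) fU(1) fX(2) fU(2)], rule sh_contr) auto
  also have "\<dots> \<le> \<gamma> * (\<gamma> ^ n * supnorm Xs Us (\<lambda>x u. Qstar x u - Qhat x u))"
    using Suc gam by (intro mult_left_mono) auto
  finally show ?case by simp
qed

lemma Ql_eq:
  assumes fixd: "\<And>x u. x \<in> Xs \<Longrightarrow> u \<in> Us \<Longrightarrow> sh \<omega> Qhat x u = Qhat x u"
    and a: "x \<in> Xs" "u \<in> Us"
  shows "Ql \<omega> x u = Qhat x u"
proof -
  define C where "C = supnorm Xs Us (\<lambda>x u. Qstar x u - Qhat x u)"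
  have b: "\<bar>it \<omega> n x u - Qhat x u\<bar> \<le> \<gamma> ^ n * C" for n
    using supnorm_ge[OF fX(1) fU(1) a, of "\<lambda>x u. it \<omega> n x u - Qhat x u"] it_conv[OF fixd, of n]
    unfolding C_def by simp
  have "(\<lambda>n. \<gamma> ^ n * C) \<longlonglongrightarrow> 0 * C"
    using gam by (intro tendsto_mult LIMSEQ_power_zero tendsto_const) auto
  hence t0: "(\<lambda>n. \<gamma> ^ n * C) \<longlonglongrightarrow> 0" by simp
  have ev: "\<forall>\<^sub>F n in sequentially. norm (it \<omega> n x u - Qhat x u) \<le> \<gamma> ^ n * C"
    using b by (intro always_eventually allI) simp
  have "(\<lambda>n. it \<omega> n x u - Qhat x u) \<longlonglongrightarrow> 0"
    by (rule Lim_null_comparison[OF ev t0])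
  hence "(\<lambda>n. (it \<omega> n x u - Qhat x u) + Qhat x u) \<longlonglongrightarrow> 0 + Qhat x u"
    by (intro tendsto_add tendsto_const)
  hence "(\<lambda>n. it \<omega> n x u) \<longlonglongrightarrow> Qhat x u" by simp
  thus ?thesis unfolding Ql_def by (rule limI)
qed

lemma avg_meas:
  assumes a: "x \<in> Xs" "u \<in> Us"
  shows "(\<lambda>\<omega>. avg_emp_bellman N Us \<gamma> \<omega> Q x u) \<in> borel_measurable SS"
proof -
  have "(\<lambda>\<omega>. emp_bellman Us \<gamma> (\<omega> i) Q x u) \<in> borel_measurable SS" if i: "i \<in> {..<N}" for i
    unfolding SS_eq
    by (rule measurable_compose[OF measurable_component_singleton[OF i] f_meas[OF a]])
  thus ?thesis unfolding avg_eq
    by (intro borel_measurable_times borel_measurable_const borel_measurable_sum) auto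
qed

lemma sh_meas:
  assumes F: "\<And>x u. x \<in> Xs \<Longrightarrow> u \<in> Us \<Longrightarrow> (\<lambda>\<omega>. F \<omega> x u) \<in> borel_measurable SS"
    and a: "x \<in> Xs" "u \<in> Us"
  shows "(\<lambda>\<omega>. sh \<omega> (F \<omega>) x u) \<in> borel_measurable SS"
proof -
  have m: "(\<lambda>\<omega>. maxQ Us (F \<omega>) y) \<in> borel_measurable SS" if y: "y \<in> Xs" for y
    unfolding maxQ_def using fU y F by (intro borel_measurable_Max) auto
  have "(\<lambda>\<omega>. bellman Xs Us P r \<gamma> (F \<omega>) x u) \<in> borel_measurable SS"
    unfolding bellman_def using m
    by (intro borel_measurable_add borel_measurable_times borel_measurable_const borel_measurable_sum) auto
  thus ?thesis unfolding sh_def shifted_bellman_def using avg_meas[OF a]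
    by (intro borel_measurable_add borel_measurable_diff borel_measurable_const) auto
qed

lemma it_meas: "x \<in> Xs \<Longrightarrow> u \<in> Us \<Longrightarrow> (\<lambda>\<omega>. it \<omega> n x u) \<in> borel_measurable SS"
proof (induction n arbitrary: x u)
  case 0 thus ?case by (simp add: it_def)
next
  case (Suc n)
  show ?case unfolding it_Suc by (rule sh_meas[OF Suc.IH Suc.prems]) 
qed

lemma Ql_meas: "x \<in> Xs \<Longrightarrow> u \<in> Us \<Longrightarrow> (\<lambda>\<omega>. Ql \<omega> x u) \<in> borel_measurable SS"
  unfolding Ql_def by (rule borel_measurable_lim_metric) (rule it_meas)

lemma sup_meas:
  assumes G: "\<And>x u. x \<in> Xs \<Longrightarrow> u \<in> Us \<Longrightarrow> (\<lambda>\<omega>. G \<omega> x u) \<in> borel_measurable SS"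
  shows "(\<lambda>\<omega>. supnorm Xs Us (G \<omega>)) \<in> borel_measurable SS"
proof -
  have "(\<lambda>\<omega>. supnorm Xs Us (G \<omega>)) = (\<lambda>\<omega>. Max ((\<lambda>p. \<bar>G \<omega> (fst p) (snd p)\<bar>) ` (Xs \<times> Us)))"
    unfolding supnorm_def by (simp add: case_prod_beta')
  also have "\<dots> \<in> borel_measurable SS"
    using fX fU G by (intro borel_measurable_Max borel_measurable_abs) auto
  finally show ?thesis .
qed

lemma target_eq:
  "{\<omega> \<in> space SS. \<forall>Qhat. (\<forall>x\<in>Xs. \<forall>u\<in>Us. shifted_bellman N Xs Us P r \<gamma> \<omega> Qbar Qhat x u = Qhat x u) \<longrightarrow>
       supnorm Xs Us (\<lambda>x u. Qhat x u - Qstar x u) \<le> Kc}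
   = {\<omega> \<in> space SS. (\<forall>x\<in>Xs. \<forall>u\<in>Us. sh \<omega> (Ql \<omega>) x u = Ql \<omega> x u) \<longrightarrow>
       supnorm Xs Us (\<lambda>x u. Ql \<omega> x u - Qstar x u) \<le> Kc}"
proof (intro set_eqI iffI)
  fix \<omega> assume L: "\<omega> \<in> {\<omega> \<in> space SS. \<forall>Qhat. (\<forall>x\<in>Xs. \<forall>u\<in>Us. shifted_bellman N Xs Us P r \<gamma> \<omega> Qbar Qhat x u = Qhat x u) \<longrightarrow>
       supnorm Xs Us (\<lambda>x u. Qhat x u - Qstar x u) \<le> Kc}"
  hence sp: "\<omega> \<in> space SS" and L2: "(\<forall>x\<in>Xs. \<forall>u\<in>Us. shifted_bellman N Xs Us P r \<gamma> \<omega> Qbar (Ql \<omega>) x u = Ql \<omega> x u) \<longrightarrow>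
       supnorm Xs Us (\<lambda>x u. Ql \<omega> x u - Qstar x u) \<le> Kc" by auto
  show "\<omega> \<in> {\<omega> \<in> space SS. (\<forall>x\<in>Xs. \<forall>u\<in>Us. sh \<omega> (Ql \<omega>) x u = Ql \<omega> x u) \<longrightarrow>
       supnorm Xs Us (\<lambda>x u. Ql \<omega> x u - Qstar x u) \<le> Kc}"
    using sp L2 by (simp add: sh_def)
next
  fix \<omega> assume R: "\<omega> \<in> {\<omega> \<in> space SS. (\<forall>x\<in>Xs. \<forall>u\<in>Us. sh \<omega> (Ql \<omega>) x u = Ql \<omega> x u) \<longrightarrow>
       supnorm Xs Us (\<lambda>x u. Ql \<omega> x u - Qstar x u) \<le> Kc}"
  hence sp: "\<omega> \<in> space SS" and H: "(\<forall>x\<in>Xs. \<forall>u\<in>Us. sh \<omega> (Ql \<omega>) x u = Ql \<omega> x u) \<longrightarrow>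
       supnorm Xs Us (\<lambda>x u. Ql \<omega> x u - Qstar x u) \<le> Kc" by auto
  have "supnorm Xs Us (\<lambda>x u. Qhat x u - Qstar x u) \<le> Kc"
    if fx: "\<forall>x\<in>Xs. \<forall>u\<in>Us. shifted_bellman N Xs Us P r \<gamma> \<omega> Qbar Qhat x u = Qhat x u" for Qhat
  proof -
    have fixd: "\<And>x u. x \<in> Xs \<Longrightarrow> u \<in> Us \<Longrightarrow> sh \<omega> Qhat x u = Qhat x u" using fx by (simp add: sh_def)
    have eqQ: "\<And>x u. x \<in> Xs \<Longrightarrow> u \<in> Us \<Longrightarrow> Ql \<omega> x u = Qhat x u" by (rule Ql_eq[OF fixd])
    have "\<forall>x\<in>Xs. \<forall>u\<in>Us. sh \<omega> (Ql \<omega>) x u = Ql \<omega> x u"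
    proof (intro ballI)
      fix x u assume a: "x \<in> Xs" "u \<in> Us"
      have "sh \<omega> (Ql \<omega>) x u = sh \<omega> Qhat x u" by (rule sh_cong) (rule eqQ)
      also have "\<dots> = Qhat x u" by (rule fixd[OF a])
      also have "\<dots> = Ql \<omega> x u" using eqQ[OF a] by simp
      finally show "sh \<omega> (Ql \<omega>) x u = Ql \<omega> x u" .
    qed
    with H have "supnorm Xs Us (\<lambda>x u. Ql \<omega> x u - Qstar x u) \<le> Kc" by blast
    moreover have "supnorm Xs Us (\<lambda>x u. Qhat x u - Qstar x u) = supnorm Xs Us (\<lambda>x u. Ql \<omega> x u - Qstar x u)"
      by (intro supnorm_cong) (simp add: eqQ)
    ultimately show ?thesis by simp
  qed
  thus "\<omega> \<in> {\<omega> \<in> space SS. \<forall>Qhat. (\<forall>x\<in>Xs. \<forall>u\<in>Us. shifted_bellman N Xs Us P r \<gamma> \<omega> Qbar Qhat x u = Qhat x u) \<longrightarrow>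
       supnorm Xs Us (\<lambda>x u. Qhat x u - Qstar x u) \<le> Kc}" using sp by blast
qed

lemma target_sets:
  "{\<omega> \<in> space SS. \<forall>Qhat. (\<forall>x\<in>Xs. \<forall>u\<in>Us. shifted_bellman N Xs Us P r \<gamma> \<omega> Qbar Qhat x u = Qhat x u) \<longrightarrow>
       supnorm Xs Us (\<lambda>x u. Qhat x u - Qstar x u) \<le> Kc} \<in> sets SS"
proof -
  have s1: "{\<omega> \<in> space SS. supnorm Xs Us (\<lambda>x u. Ql \<omega> x u - Qstar x u) \<le> Kc} \<in> sets SS"
  proof -
    have "(\<lambda>\<omega>. supnorm Xs Us (\<lambda>x u. Ql \<omega> x u - Qstar x u)) \<in> borel_measurable SS"
      using Ql_meas by (intro sup_meas borel_measurable_diff borel_measurable_const) auto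
    thus ?thesis by (intro borel_measurable_le) auto
  qed
  have s2: "{\<omega> \<in> space SS. \<forall>x\<in>Xs. \<forall>u\<in>Us. sh \<omega> (Ql \<omega>) x u = Ql \<omega> x u} \<in> sets SS"
  proof (intro sets.sets_Collect_finite_All fX(1) fU(1))
    fix x u assume a: "x \<in> Xs" "u \<in> Us"
    show "{\<omega> \<in> space SS. sh \<omega> (Ql \<omega>) x u = Ql \<omega> x u} \<in> sets SS"
      by (intro borel_measurable_eq sh_meas Ql_meas a) auto
  qed
  show ?thesis unfolding target_eq by (rule sets.sets_Collect_imp[OF s1 s2])
qed

end




context mdp2
begin

lemma det_bound:
  assumes fx: "\<forall>x\<in>Xs. \<forall>u\<in>Us. shifted_bellman N Xs Us P r \<gamma> \<omega> Qbar Qhat x u = Qhat x u"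
    and bE: "\<And>x u. x \<in> Xs \<Longrightarrow> u \<in> Us \<Longrightarrow> \<bar>avg_emp_bellman N Us \<gamma> \<omega> Qstar x u - Qstar x u\<bar> \<le> tE"
    and bD: "\<And>x u. x \<in> Xs \<Longrightarrow> u \<in> Us \<Longrightarrow> \<bar>(avg_emp_bellman N Us \<gamma> \<omega> Qbar x u - avg_emp_bellman N Us \<gamma> \<omega> Qstar x u)
             - (bellman Xs Us P r \<gamma> Qbar x u - bellman Xs Us P r \<gamma> Qstar x u)\<bar> \<le> tD"
  shows "supnorm Xs Us (\<lambda>x u. Qhat x u - Qstar x u) \<le> (tE + tD) / (1 - \<gamma>)"
proof -
  define \<Delta> where "\<Delta> = supnorm Xs Us (\<lambda>x u. Qhat x u - Qstar x u)"
  have "\<Delta> \<le> \<gamma> * \<Delta> + tE + tD"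
    unfolding \<Delta>_def
  proof (rule supnorm_le[OF fX(1) fU(1) fX(2) fU(2)])
    fix x u assume a: "x \<in> Xs" "u \<in> Us"
    have "Qhat x u - Qstar x u = (bellman Xs Us P r \<gamma> Qhat x u - bellman Xs Us P r \<gamma> Qstar x u)
          + (avg_emp_bellman N Us \<gamma> \<omega> Qstar x u - Qstar x u)
          + ((avg_emp_bellman N Us \<gamma> \<omega> Qbar x u - avg_emp_bellman N Us \<gamma> \<omega> Qstar x u)
             - (bellman Xs Us P r \<gamma> Qbar x u - bellman Xs Us P r \<gamma> Qstar x u))"
    proof -
      have fxa: "bellman Xs Us P r \<gamma> Qhat x u - bellman Xs Us P r \<gamma> Qbar x u + avg_emp_bellman N Us \<gamma> \<omega> Qbar x u = Qhat x u"
        using fx a by (simp add: shifted_bellman_def)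
      thus ?thesis by linarith
    qed
    moreover have "\<bar>bellman Xs Us P r \<gamma> Qhat x u - bellman Xs Us P r \<gamma> Qstar x u\<bar> \<le> \<gamma> * supnorm Xs Us (\<lambda>x u. Qhat x u - Qstar x u)"
      using bellman_diff[of Xs Us P x u \<gamma> r Qhat Qstar] fX fU supp[OF a] gam by simp
    ultimately show "\<bar>Qhat x u - Qstar x u\<bar> \<le> \<gamma> * supnorm Xs Us (\<lambda>x u. Qhat x u - Qstar x u) + tE + tD"
      using bE[OF a] bD[OF a] by linarith
  qed
  hence "\<Delta> * (1 - \<gamma>) \<le> tE + tD" by (simp add: algebra_simps)
  thus ?thesis unfolding \<Delta>_def[symmetric] using gam by (simp add: le_divide_eq)
qed

lemma sig_nonneg: "0 \<le> sig"
proof -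
  obtain x u where a: "x \<in> Xs" "u \<in> Us" using fX fU by blast
  have "\<bar>var_of S (\<lambda>s. emp_bellman Us \<gamma> s Qstar x u)\<bar> \<le> sig" unfolding sig_def sigma_diag_def
    using a fX fU by (intro Max_ge) force+
  thus ?thesis by linarith
qed

lemma arith_final:
  fixes aa :: real
  assumes a0: "0 < aa" and a1: "aa \<le> (1 - \<gamma>)\<^sup>2 / 1000000"
  shows "(2 * sqrt (sig * aa) + 2 * Bf * aa + (2 * sqrt (Bh\<^sup>2 * aa) + 2 * Bh * aa)) / (1 - \<gamma>)
    \<le> W / 33 + 4 * (sqrt sig / (1 - \<gamma>) * sqrt aa + (rbar + \<gamma> * supnorm Xs Us Qstar) / (1 - \<gamma>) * aa)"
proof -
  have g1: "0 < 1 - \<gamma>" using gam by simp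
  have sq: "sqrt aa \<le> (1 - \<gamma>) / 1000"
  proof -
    have "sqrt aa \<le> sqrt ((1 - \<gamma>)\<^sup>2 / 1000000)" using a1 by simp
    also have "\<dots> = (1 - \<gamma>) / 1000" using g1 by (simp add: real_sqrt_divide)
    finally show ?thesis .
  qed
  have sa0: "0 \<le> sqrt aa" using less_imp_le[OF a0] by simp
  have aa_le: "aa \<le> sqrt aa"
  proof -
    have "(1 - \<gamma>) / 1000 \<le> 1" using gam by simp
    hence "sqrt aa \<le> 1" using sq by linarith
    hence "sqrt aa * sqrt aa \<le> 1 * sqrt aa" using sa0 by (intro mult_right_mono) auto
    thus ?thesis using less_imp_le[OF a0] by simp
  qed
  have D1: "2 * sqrt (Bh\<^sup>2 * aa) + 2 * Bh * aa \<le> 8 * W * sqrt aa"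
  proof -
    have "sqrt (Bh\<^sup>2 * aa) = Bh * sqrt aa" using Bh_nonneg by (simp add: real_sqrt_mult)
    moreover have "Bh * aa \<le> Bh * sqrt aa" using aa_le Bh_nonneg by (intro mult_left_mono)
    moreover have "\<gamma> * W \<le> 1 * W" using gam W_nonneg by (intro mult_right_mono) auto
    hence "Bh \<le> 2 * W" by (simp add: Bh_def)
    hence "Bh * sqrt aa \<le> 2 * W * sqrt aa" using sa0 by (intro mult_right_mono)
    ultimately show ?thesis by linarith
  qed
  have D2: "8 * W * sqrt aa \<le> W / 33 * (1 - \<gamma>)"
  proof -
    have "8 * W * sqrt aa \<le> 8 * W * ((1 - \<gamma>) / 1000)" using sq W_nonneg by (intro mult_left_mono) auto
    also have "\<dots> \<le> W / 33 * (1 - \<gamma>)"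
    proof -
      have wg: "0 \<le> W * (1 - \<gamma>)" using W_nonneg g1 by simp
      have e1: "8 * W * ((1 - \<gamma>) / 1000) = (8 / 1000) * (W * (1 - \<gamma>))" by simp
      have e2: "W / 33 * (1 - \<gamma>) = (1 / 33) * (W * (1 - \<gamma>))" by simp
      have "(8 / 1000) * (W * (1 - \<gamma>)) \<le> (1 / 33) * (W * (1 - \<gamma>))" using wg by (intro mult_right_mono) auto
      thus ?thesis using e1 e2 by linarith
    qed
    finally show ?thesis .
  qed
  have gen: "\<And>(X::real) (Y::real) (T::real) (Z::real). X = Y \<Longrightarrow> 0 \<le> Y \<Longrightarrow> T \<le> 4 * Z \<Longrightarrow> 2 * X + T \<le> 4 * (Y + Z)" by (smt (verit))
  have E1: "2 * sqrt (sig * aa) + 2 * Bf * aa \<le> 4 * (sqrt sig * sqrt aa + (rbar + \<gamma> * supnorm Xs Us Qstar) * aa)"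
  proof -
    have "sqrt (sig * aa) = sqrt sig * sqrt aa" by (simp add: real_sqrt_mult)
    moreover have "0 \<le> sqrt sig * sqrt aa" using sig_nonneg sa0 by simp
    moreover have "Bf \<le> 2 * (rbar + \<gamma> * supnorm Xs Us Qstar)" using rbar_nonneg by (simp add: Bf_def)
    hence "2 * Bf * aa \<le> 4 * (rbar + \<gamma> * supnorm Xs Us Qstar) * aa" using a0 by (intro mult_right_mono) auto
    hence "2 * Bf * aa \<le> 4 * ((rbar + \<gamma> * supnorm Xs Us Qstar) * aa)" by (simp only: mult.assoc)
    ultimately show ?thesis by (rule gen)
  qed
  have "(2 * sqrt (sig * aa) + 2 * Bf * aa + (2 * sqrt (Bh\<^sup>2 * aa) + 2 * Bh * aa)) / (1 - \<gamma>)
      \<le> (4 * (sqrt sig * sqrt aa + (rbar + \<gamma> * supnorm Xs Us Qstar) * aa) + W / 33 * (1 - \<gamma>)) / (1 - \<gamma>)"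
    using D1 D2 E1 g1 by (intro divide_right_mono) auto
  also have "\<dots> = W / 33 + 4 * (sqrt sig / (1 - \<gamma>) * sqrt aa + (rbar + \<gamma> * supnorm Xs Us Qstar) / (1 - \<gamma>) * aa)"
  proof -
    have gen2: "\<And>(c::real) ys sa b aa w. c \<noteq> 0 \<Longrightarrow> (4 * (ys * sa + b * aa) + w * c) / c = w + 4 * (ys / c * sa + b / c * aa)"
      by (simp add: field_simps)
    show ?thesis by (rule gen2) (use g1 in simp)
  qed
  finally show ?thesis .
qed

end




context mdp
begin

lemma L_pos:
  assumes M: "1 \<le> M" and d: "0 < \<delta>" "\<delta> < 1"
  shows "0 < ln (8 * real (card Xs * card Us) * real M / \<delta>)"
proof -
  have c1: "1 \<le> card Xs * card Us" using fX fU by (simp add: Suc_le_eq card_gt_0_iff)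
  have "1 \<le> real (card Xs * card Us) * real M" using c1 M
    by (metis mult_le_mono of_nat_1 of_nat_le_iff of_nat_mult mult_1)
  hence "8 \<le> 8 * real (card Xs * card Us) * real M" by simp
  moreover have "8 * real (card Xs * card Us) * real M \<le> 8 * real (card Xs * card Us) * real M / \<delta>"
  proof -
    have X0: "0 \<le> 8 * real (card Xs * card Us) * real M" by simp
    have "8 * real (card Xs * card Us) * real M * \<delta> \<le> 8 * real (card Xs * card Us) * real M"
      using d X0 by (intro mult_left_le) auto
    thus ?thesis by (simp only: pos_le_divide_eq[OF d(1)])
  qed
  ultimately have "1 < 8 * real (card Xs * card Us) * real M / \<delta>" by linarith
  thus ?thesis by simp
qed

lemma N_pos:
  assumes M: "1 \<le> M" and d: "0 < \<delta>" "\<delta> < 1" and c: "0 < (c::real)"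
    and Nc: "c * ln (8 * real (card Xs * card Us) * real M / \<delta>) / (1 - \<gamma>)\<^sup>2 \<le> real N"
  shows "0 < N"
proof -
  have "0 < c * ln (8 * real (card Xs * card Us) * real M / \<delta>) / (1 - \<gamma>)\<^sup>2"
    using L_pos[OF M d] c gam by simp
  thus ?thesis using Nc by simp
qed

end

context mdp2
begin

lemma final_prob:
  fixes M :: nat and \<delta> :: real
  assumes M: "1 \<le> M" and d: "0 < \<delta>" "\<delta> < 1"
    and Nc: "1000000 * ln (8 * real (card Xs * card Us) * real M / \<delta>) / (1 - \<gamma>)\<^sup>2 \<le> real N"
  shows "1 - \<delta> / (2 * real M) \<le> measure SS {\<omega> \<in> space SS. \<forall>Qhat. (\<forall>x\<in>Xs. \<forall>u\<in>Us. shifted_bellman N Xs Us P r \<gamma> \<omega> Qbar Qhat x u = Qhat x u) \<longrightarrow>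
            supnorm Xs Us (\<lambda>x u. Qhat x u - Qstar x u)
              \<le> supnorm Xs Us (\<lambda>x u. Qbar x u - Qstar x u) / 33
                 + 4 * (sqrt (sigma_diag Xs Us P \<rho> \<gamma> Qstar) / (1 - \<gamma>)
                          * sqrt (ln (8 * real (card Xs * card Us) * real M / \<delta>) / real N)
                        + (rbar + \<gamma> * supnorm Xs Us Qstar) / (1 - \<gamma>)
                          * (ln (8 * real (card Xs * card Us) * real M / \<delta>) / real N))}"
    (is "_ \<le> measure SS ?T")
proof -
  define D where "D = card Xs * card Us"
  define L where "L = ln (8 * real D * real M / \<delta>)"
  define aa where "aa = L / real N"
  define Kc where "Kc = W / 33 + 4 * (sqrt sig / (1 - \<gamma>) * sqrt aa + (rbar + \<gamma> * supnorm Xs Us Qstar) / (1 - \<gamma>) * aa)"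
  have T_eq: "?T = {\<omega> \<in> space SS. \<forall>Qhat. (\<forall>x\<in>Xs. \<forall>u\<in>Us. shifted_bellman N Xs Us P r \<gamma> \<omega> Qbar Qhat x u = Qhat x u) \<longrightarrow>
            supnorm Xs Us (\<lambda>x u. Qhat x u - Qstar x u) \<le> Kc}"
    by (simp add: Kc_def W_def sig_def aa_def L_def D_def)
  have g1: "0 < 1 - \<gamma>" using gam by simp
  have c1: "1 \<le> card Xs * card Us" using fX fU by (simp add: Suc_le_eq card_gt_0_iff)
  have D1: "1 \<le> real D" unfolding D_def using c1 by (metis of_nat_1 of_nat_le_iff)
  have M1: "1 \<le> real M" using M by simp
  have Lpos: "0 < L" using L_pos[OF M d] by (simp add: L_def D_def)
  have Np: "0 < real N" using Npos by simp
  have aa0: "0 < aa" using Lpos Np by (simp add: aa_def)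
  have aa1: "aa \<le> (1 - \<gamma>)\<^sup>2 / 1000000"
  proof -
    have "1000000 * L / (1 - \<gamma>)\<^sup>2 \<le> real N" using Nc by (simp add: L_def D_def)
    hence "1000000 * L \<le> real N * (1 - \<gamma>)\<^sup>2" using g1 by (simp add: pos_divide_le_eq)
    hence "L \<le> (1 - \<gamma>)\<^sup>2 / 1000000 * real N" by (simp add: mult.commute)
    thus ?thesis using Np by (simp add: aa_def pos_divide_le_eq)
  qed
  have NL: "real N * aa = L" using Np by (simp add: aa_def)
  have pos8: "0 < 8 * real D * real M / \<delta>" using D1 M1 d by simp
  have expL: "exp (- (real N * aa)) = \<delta> / (8 * real D * real M)"
    unfolding NL L_def exp_minus using exp_ln[OF pos8] by simp
  define tE where "tE = 2 * sqrt (sig * aa) + 2 * Bf * aa"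
  define tD where "tD = 2 * sqrt (Bh\<^sup>2 * aa) + 2 * Bh * aa"
  define BE where "BE p = {\<omega> \<in> space SS. tE < \<bar>avg_emp_bellman N Us \<gamma> \<omega> Qstar (fst p) (snd p) - Qstar (fst p) (snd p)\<bar>}" for p
  define BD where "BD p = {\<omega> \<in> space SS. tD < \<bar>(avg_emp_bellman N Us \<gamma> \<omega> Qbar (fst p) (snd p) - avg_emp_bellman N Us \<gamma> \<omega> Qstar (fst p) (snd p))
             - (bellman Xs Us P r \<gamma> Qbar (fst p) (snd p) - bellman Xs Us P r \<gamma> Qstar (fst p) (snd p))\<bar>}" for p
  interpret PM: prob_space SS unfolding SS_eq by (rule prob_space_PiM) (rule S_prob)
  have sBE: "BE p \<in> sets SS" if p: "p \<in> Xs \<times> Us" for p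
  proof -
    have "(\<lambda>\<omega>. \<bar>avg_emp_bellman N Us \<gamma> \<omega> Qstar (fst p) (snd p) - Qstar (fst p) (snd p)\<bar>) \<in> borel_measurable SS"
      using avg_meas p by (intro borel_measurable_abs borel_measurable_diff borel_measurable_const) auto
    thus ?thesis unfolding BE_def by (intro borel_measurable_less borel_measurable_const)
  qed
  have sBD: "BD p \<in> sets SS" if p: "p \<in> Xs \<times> Us" for p
  proof -
    have "(\<lambda>\<omega>. \<bar>(avg_emp_bellman N Us \<gamma> \<omega> Qbar (fst p) (snd p) - avg_emp_bellman N Us \<gamma> \<omega> Qstar (fst p) (snd p))
             - (bellman Xs Us P r \<gamma> Qbar (fst p) (snd p) - bellman Xs Us P r \<gamma> Qstar (fst p) (snd p))\<bar>) \<in> borel_measurable SS"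
      using avg_meas p by (intro borel_measurable_abs borel_measurable_diff borel_measurable_const) auto
    thus ?thesis unfolding BD_def by (intro borel_measurable_less borel_measurable_const)
  qed
  have mBE: "measure SS (BE p) \<le> 2 * exp (- (real N * aa))" if p: "p \<in> Xs \<times> Us" for p
    unfolding BE_def using p by (intro probE aa0) (auto simp: tE_def)
  have mBD: "measure SS (BD p) \<le> 2 * exp (- (real N * aa))" if p: "p \<in> Xs \<times> Us" for p
    unfolding BD_def using p by (intro probD aa0) (auto simp: tD_def)
  define Bad where "Bad = (\<Union>p\<in>Xs \<times> Us. BE p \<union> BD p)"
  have sBad: "Bad \<in> sets SS" unfolding Bad_def using sBE sBD fX fU by (intro sets.finite_UN) auto
  have "measure SS Bad \<le> (\<Sum>p\<in>Xs \<times> Us. measure SS (BE p \<union> BD p))"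
    unfolding Bad_def using sBE sBD fX fU by (intro measure_UNION_le) auto
  also have "\<dots> \<le> (\<Sum>p\<in>Xs \<times> Us. 4 * exp (- (real N * aa)))"
  proof (rule sum_mono)
    fix p assume p: "p \<in> Xs \<times> Us"
    have "measure SS (BE p \<union> BD p) \<le> measure SS (BE p) + measure SS (BD p)"
      using sBE[OF p] sBD[OF p] by (rule measure_Un_le)
    thus "measure SS (BE p \<union> BD p) \<le> 4 * exp (- (real N * aa))" using mBE[OF p] mBD[OF p] by linarith
  qed
  also have "\<dots> = real D * 4 * (\<delta> / (8 * real D * real M))"
    by (simp add: D_def card_cartesian_product expL)
  also have "\<dots> = \<delta> / (2 * real M)" using D1 M1 by (simp add: field_simps)
  finally have mBad: "measure SS Bad \<le> \<delta> / (2 * real M)" .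
  have sub: "space SS - Bad \<subseteq> ?T"
  proof
    fix \<omega> assume w: "\<omega> \<in> space SS - Bad"
    have bE: "\<bar>avg_emp_bellman N Us \<gamma> \<omega> Qstar x u - Qstar x u\<bar> \<le> tE" if a: "x \<in> Xs" "u \<in> Us" for x u
    proof -
      have "\<omega> \<notin> BE (x,u)" using w a by (auto simp: Bad_def)
      thus ?thesis using w by (auto simp: BE_def)
    qed
    have bD: "\<bar>(avg_emp_bellman N Us \<gamma> \<omega> Qbar x u - avg_emp_bellman N Us \<gamma> \<omega> Qstar x u)
             - (bellman Xs Us P r \<gamma> Qbar x u - bellman Xs Us P r \<gamma> Qstar x u)\<bar> \<le> tD" if a: "x \<in> Xs" "u \<in> Us" for x u
    proof -
      have "\<omega> \<notin> BD (x,u)" using w a by (auto simp: Bad_def)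
      thus ?thesis using w by (auto simp: BD_def)
    qed
    have "supnorm Xs Us (\<lambda>x u. Qhat x u - Qstar x u) \<le> Kc"
      if fx: "\<forall>x\<in>Xs. \<forall>u\<in>Us. shifted_bellman N Xs Us P r \<gamma> \<omega> Qbar Qhat x u = Qhat x u" for Qhat
    proof -
      have "supnorm Xs Us (\<lambda>x u. Qhat x u - Qstar x u) \<le> (tE + tD) / (1 - \<gamma>)"
        by (rule det_bound[OF fx bE bD])
      also have "\<dots> \<le> Kc" unfolding Kc_def tE_def tD_def
        using arith_final[OF aa0 aa1] by (simp add: add.assoc)
      finally show ?thesis .
    qed
    thus "\<omega> \<in> ?T" unfolding T_eq using w by blast
  qed
  have sT: "?T \<in> sets SS" using target_sets by simp
  have "measure SS (space SS - Bad) \<le> measure SS ?T" by (rule PM.finite_measure_mono[OF sub sT])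
  moreover have "measure SS (space SS - Bad) = 1 - measure SS Bad" by (rule PM.prob_compl[OF sBad])
  ultimately show ?thesis using mBad by linarith
qed

end

lemma main_aux:
  fixes Xs Us :: "nat set" and P :: "nat \<Rightarrow> nat \<Rightarrow> nat pmf" and r :: "nat \<Rightarrow> nat \<Rightarrow> real"
    and \<rho> :: "nat \<Rightarrow> nat \<Rightarrow> real measure" and rbar \<gamma> :: real and Qstar Qbar :: "nat \<Rightarrow> nat \<Rightarrow> real"
    and M :: nat and \<delta> :: real and N :: nat
  assumes h1: "finite Xs" "Xs \<noteq> {}" "finite Us" "Us \<noteq> {}" "0 < \<gamma>" "\<gamma> < 1"
    and h2: "\<forall>x\<in>Xs. \<forall>u\<in>Us. set_pmf (P x u) \<subseteq> Xs"
    and h3: "\<forall>x\<in>Xs. \<forall>u\<in>Us. prob_space (\<rho> x u) \<and> sets (\<rho> x u) = sets borel \<and>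
          integrable (\<rho> x u) (\<lambda>z. z) \<and> (\<integral>z. z \<partial>(\<rho> x u)) = r x u \<and>
          (AE z in \<rho> x u. \<bar>z - r x u\<bar> \<le> rbar)"
    and h4: "\<forall>x\<in>Xs. \<forall>u\<in>Us. bellman Xs Us P r \<gamma> Qstar x u = Qstar x u"
    and h5: "M \<ge> 1" "0 < \<delta>" "\<delta> < 1"
    and h6: "real N \<ge> 1000000 * ln (8 * real (card Xs * card Us) * real M / \<delta>) / (1 - \<gamma>)\<^sup>2"
  shows "measure (samples_law N Xs Us P \<rho>)
        {\<omega> \<in> space (samples_law N Xs Us P \<rho>).
          \<forall>Qhat. (\<forall>x\<in>Xs. \<forall>u\<in>Us. shifted_bellman N Xs Us P r \<gamma> \<omega> Qbar Qhat x u = Qhat x u) \<longrightarrow>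
            supnorm Xs Us (\<lambda>x u. Qhat x u - Qstar x u)
              \<le> supnorm Xs Us (\<lambda>x u. Qbar x u - Qstar x u) / 33
                 + 4 * (sqrt (sigma_diag Xs Us P \<rho> \<gamma> Qstar) / (1 - \<gamma>)
                          * sqrt (ln (8 * real (card Xs * card Us) * real M / \<delta>) / real N)
                        + (rbar + \<gamma> * supnorm Xs Us Qstar) / (1 - \<gamma>)
                          * (ln (8 * real (card Xs * card Us) * real M / \<delta>) / real N))}
      \<ge> 1 - \<delta> / (2 * real M)"
proof -
  interpret m: mdp Xs Us P r \<rho> rbar \<gamma>
    by unfold_locales (use h1 h2 h3 in auto)
  have Np: "0 < N" by (rule m.N_pos[of M \<delta> 1000000]) (use h5 h6 in auto)
  interpret m2: mdp2 Xs Us P r \<rho> rbar \<gamma> Qstar Qbar N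
    by unfold_locales (use h4 Np in auto)
  show ?thesis by (rule m2.final_prob) (use h5 h6 in auto)
qed

theorem mainTheorem9:
  shows "\<exists>c c4 :: real. c > 0 \<and> c4 > 0 \<and>
    (\<forall>(Xs :: nat set) (Us :: nat set) (P :: nat \<Rightarrow> nat \<Rightarrow> nat pmf) (r :: nat \<Rightarrow> nat \<Rightarrow> real)
       (\<rho> :: nat \<Rightarrow> nat \<Rightarrow> real measure) (rbar :: real) (\<gamma> :: real)
       (Qstar :: nat \<Rightarrow> nat \<Rightarrow> real) (Qbar :: nat \<Rightarrow> nat \<Rightarrow> real) (M :: nat) (\<delta> :: real) (N :: nat).
      finite Xs \<and> Xs \<noteq> {} \<and> finite Us \<and> Us \<noteq> {} \<and>
      0 < \<gamma> \<and> \<gamma> < 1 \<and>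
      (\<forall>x\<in>Xs. \<forall>u\<in>Us. set_pmf (P x u) \<subseteq> Xs) \<and>
      (\<forall>x\<in>Xs. \<forall>u\<in>Us. prob_space (\<rho> x u) \<and> sets (\<rho> x u) = sets borel \<and>
          integrable (\<rho> x u) (\<lambda>z. z) \<and> (\<integral>z. z \<partial>(\<rho> x u)) = r x u \<and>
          (AE z in \<rho> x u. \<bar>z - r x u\<bar> \<le> rbar)) \<and>
      (\<forall>x\<in>Xs. \<forall>u\<in>Us. bellman Xs Us P r \<gamma> Qstar x u = Qstar x u) \<and>
      M \<ge> 1 \<and> 0 < \<delta> \<and> \<delta> < 1 \<and>
      real N \<ge> c * ln (8 * real (card Xs * card Us) * real M / \<delta>) / (1 - \<gamma>)\<^sup>2
      \<longrightarrow>
      measure (samples_law N Xs Us P \<rho>)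
        {\<omega> \<in> space (samples_law N Xs Us P \<rho>).
          \<forall>Qhat. (\<forall>x\<in>Xs. \<forall>u\<in>Us. shifted_bellman N Xs Us P r \<gamma> \<omega> Qbar Qhat x u = Qhat x u) \<longrightarrow>
            supnorm Xs Us (\<lambda>x u. Qhat x u - Qstar x u)
              \<le> supnorm Xs Us (\<lambda>x u. Qbar x u - Qstar x u) / 33
                 + c4 * (sqrt (sigma_diag Xs Us P \<rho> \<gamma> Qstar) / (1 - \<gamma>)
                          * sqrt (ln (8 * real (card Xs * card Us) * real M / \<delta>) / real N)
                        + (rbar + \<gamma> * supnorm Xs Us Qstar) / (1 - \<gamma>)
                          * (ln (8 * real (card Xs * card Us) * real M / \<delta>) / real N))}
      \<ge> 1 - \<delta> / (2 * real M))"
  apply (rule exI[of _ 1000000], rule exI[of _ 4])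
  apply (intro conjI)
    apply simp
   apply simp
  apply (intro allI impI)
  apply (elim conjE)
  apply (rule main_aux)
               apply assumption+
  done


end
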